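(* Assume Conditions A and B, and suppose $a$ and $b$ are natural boundaries. Let $c_0(a),c_0(b)\in[0,\infty]$ be the boundary limits of $c_0$. Then $\lim_{y\to a}\frac{g_0(z)-g_0(y)}{\zeta(z)-\zeta(y)}=c_0(a)$ for all $z\in\mathcal I$; $\lim_{z\to b}\frac{g_0(z)-g_0(y)}{\zeta(z)-\zeta(y)}=c_0(b)$ for all $y\in\mathcal I$; $\lim_{(y,z)\to(a,a),\,y<z}\frac{g_0(z)-g_0(y)}{\zeta(z)-\zeta(y)}=c_0(a)$ and $\lim_{(y,z)\to(b,b),\,y<z}\frac{g_0(z)-g_0(y)}{\zeta(z)-\zeta(y)}=c_0(b)$; $\lim_{y\to a}g_0(y)/\zeta(y)=c_0(a)$ and $\lim_{z\to b}g_0(z)/\zeta(z)=c_0(b)$. In particular $\lim_{y\to a}g_0(y)=-\infty$ when $c_0(a)>0$ and $\lim_{z\to b}g_0(z)=\infty$ when $c_0(b)>0$.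
   Context: Setting. Let $\mathcal I=(a,b)$ with $-\infty\le a<b\le\infty$, let $\mu,\sigma:\mathcal I\to\mathbb R$ be continuous with $\sigma(x)\neq0$ on $\mathcal I$, and let $X_0$ be the regular diffusion $dX_0(t)=\mu(X_0(t))\,dt+\sigma(X_0(t))\,dW(t)$, $X_0(0)=x_0\in\mathcal I$. Scale density $s(x)=\exp(-\int^x 2\mu/\sigma^2)$, scale function $S(x)=\int^x s$, scale measure $S[y,z]=S(z)-S(y)$ ($dS$), speed density $m=1/(\sigma^2 s)$, speed measure $M[y,z]=\int_y^z m$ ($dM$). Boundaries are classified in Feller's sense; $a$ is attainable iff regular or exit. Condition A: $S(a,x]<\infty$ for $x\in\mathcal I$ and $S[x,b)=\infty$ (so $a$ is regular, exit or natural, $b$ is natural or entrance); if $a$ is reflecting then $\lim_{x\to a}s(x)M[x,b)<\infty$; if $b$ is natural then $M[y,b)<\infty$ for $y\in\mathcal I$; infinite boundaries are natural. State space $\mathcal E$: $\mathcal I$ with $a$ added if $a$ is attainable and $b$ added if $b$ is entrance. Condition B: (a) $c_0:\mathcal E\to[0,\infty)$ is continuous; if $a$ (resp. $b$) is natural, $c_0(a):=\lim_{x\to a}c_0(x)$ (resp. $c_0(b):=\lim_{x\to b}c_0(x)$) exists in $[0,\infty]$, with $c_0(-\infty)=\infty$ if $a=-\infty$ and $c_0(\infty)=\infty$ if $b=\infty$; $\int_y^b c_0\,dM<\infty$ for every $y\in\mathcal I$; if $a$ is reflecting, $\lim_{x\to a}s(x)\int_x^b c_0\,dM<\infty$. (b)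 with $\overline{\mathcal R}=\{(y,z)\in\mathcal E^2:y\le z\}$, $c_1:\overline{\mathcal R}\to[0,\infty]$ is continuous with $c_1\ge k_1$ for a constant $k_1>0$; for each $z\in\mathcal E\setminus\{a\}$, $c_1(\cdot,z)$ is continuously differentiable near $a$, and for each $y\in\mathcal E\setminus\{b\}$, $c_1(y,\cdot)$ is continuously differentiable near $b$. Functions: $g_0(x)=\int_{x_0}^x\int_u^b 2c_0(v)\,dM(v)\,dS(u)$ and $\zeta(x)=\int_{x_0}^x 2M[u,b)\,dS(u)$ for $x\in\mathcal I$. *)

theory Defs
  imports "HOL-Analysis.Analysis"
begin

definition Iab :: "ereal \<Rightarrow> ereal \<Rightarrow> real set" where
  "Iab a b = {x. a < ereal x \<and> ereal x < b}"

definition sint :: "(real \<Rightarrow> real) \<Rightarrow> real \<Rightarrow> real \<Rightarrow> real" where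
  "sint f u v = (if u \<le> v then integral {u..v} f else - integral {v..u} f)"

definition sdens :: "(real \<Rightarrow> real) \<Rightarrow> (real \<Rightarrow> real) \<Rightarrow> real \<Rightarrow> real \<Rightarrow> real" where
  "sdens mu sig x0 x = exp (- sint (\<lambda>v. 2 * mu v / (sig v)^2) x0 x)"

definition mdens :: "(real \<Rightarrow> real) \<Rightarrow> (real \<Rightarrow> real) \<Rightarrow> real \<Rightarrow> real \<Rightarrow> real" where
  "mdens mu sig x0 x = 1 / ((sig x)^2 * sdens mu sig x0 x)"

definition Smeas :: "(real \<Rightarrow> real) \<Rightarrow> (real \<Rightarrow> real) \<Rightarrow> real \<Rightarrow> real set \<Rightarrow> ennreal" where
  "Smeas mu sig x0 A = (\<integral>\<^sup>+ x\<in>A. ennreal (sdens mu sig x0 x) \<partial>lborel)"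

definition Mmeas :: "(real \<Rightarrow> real) \<Rightarrow> (real \<Rightarrow> real) \<Rightarrow> real \<Rightarrow> real set \<Rightarrow> ennreal" where
  "Mmeas mu sig x0 A = (\<integral>\<^sup>+ x\<in>A. ennreal (mdens mu sig x0 x) \<partial>lborel)"

definition Sigma_a :: "(real \<Rightarrow> real) \<Rightarrow> (real \<Rightarrow> real) \<Rightarrow> real \<Rightarrow> ereal \<Rightarrow> ereal \<Rightarrow> ennreal" where
  "Sigma_a mu sig x0 a b = (\<integral>\<^sup>+ u\<in>{u\<in>Iab a b. u \<le> x0}.
     Mmeas mu sig x0 {v\<in>Iab a b. u \<le> v \<and> v \<le> x0} * ennreal (sdens mu sig x0 u) \<partial>lborel)"

definition N_a :: "(real \<Rightarrow> real) \<Rightarrow> (real \<Rightarrow> real) \<Rightarrow> real \<Rightarrow> ereal \<Rightarrow> ereal \<Rightarrow> ennreal" where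
  "N_a mu sig x0 a b = (\<integral>\<^sup>+ u\<in>{u\<in>Iab a b. u \<le> x0}.
     Mmeas mu sig x0 {v\<in>Iab a b. v \<le> u} * ennreal (sdens mu sig x0 u) \<partial>lborel)"

definition Sigma_b :: "(real \<Rightarrow> real) \<Rightarrow> (real \<Rightarrow> real) \<Rightarrow> real \<Rightarrow> ereal \<Rightarrow> ereal \<Rightarrow> ennreal" where
  "Sigma_b mu sig x0 a b = (\<integral>\<^sup>+ u\<in>{u\<in>Iab a b. x0 \<le> u}.
     Mmeas mu sig x0 {v\<in>Iab a b. x0 \<le> v \<and> v \<le> u} * ennreal (sdens mu sig x0 u) \<partial>lborel)"

definition N_b :: "(real \<Rightarrow> real) \<Rightarrow> (real \<Rightarrow> real) \<Rightarrow> real \<Rightarrow> ereal \<Rightarrow> ereal \<Rightarrow> ennreal" where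
  "N_b mu sig x0 a b = (\<integral>\<^sup>+ u\<in>{u\<in>Iab a b. x0 \<le> u}.
     Mmeas mu sig x0 {v\<in>Iab a b. u \<le> v} * ennreal (sdens mu sig x0 u) \<partial>lborel)"

definition regular_a where
  "regular_a mu sig x0 a b \<longleftrightarrow> Sigma_a mu sig x0 a b < \<infinity> \<and> N_a mu sig x0 a b < \<infinity>"
definition exit_a where
  "exit_a mu sig x0 a b \<longleftrightarrow> Sigma_a mu sig x0 a b < \<infinity> \<and> N_a mu sig x0 a b = \<infinity>"
definition entrance_a where
  "entrance_a mu sig x0 a b \<longleftrightarrow> Sigma_a mu sig x0 a b = \<infinity> \<and> N_a mu sig x0 a b < \<infinity>"
definition natural_a where
  "natural_a mu sig x0 a b \<longleftrightarrow> Sigma_a mu sig x0 a b = \<infinity> \<and> N_a mu sig x0 a b = \<infinity>"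

definition regular_b where
  "regular_b mu sig x0 a b \<longleftrightarrow> Sigma_b mu sig x0 a b < \<infinity> \<and> N_b mu sig x0 a b < \<infinity>"
definition exit_b where
  "exit_b mu sig x0 a b \<longleftrightarrow> Sigma_b mu sig x0 a b < \<infinity> \<and> N_b mu sig x0 a b = \<infinity>"
definition entrance_b where
  "entrance_b mu sig x0 a b \<longleftrightarrow> Sigma_b mu sig x0 a b = \<infinity> \<and> N_b mu sig x0 a b < \<infinity>"
definition natural_b where
  "natural_b mu sig x0 a b \<longleftrightarrow> Sigma_b mu sig x0 a b = \<infinity> \<and> N_b mu sig x0 a b = \<infinity>"

definition attainable_a where
  "attainable_a mu sig x0 a b \<longleftrightarrow> regular_a mu sig x0 a b \<or> exit_a mu sig x0 a b"

definition at_left_end :: "ereal \<Rightarrow> real filter" where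
  "at_left_end a = (if a = -\<infinity> then at_bot else at_right (real_of_ereal a))"

definition at_right_end :: "ereal \<Rightarrow> real filter" where
  "at_right_end b = (if b = \<infinity> then at_top else at_left (real_of_ereal b))"

definition Eleft where
  "Eleft mu sig x0 a b =
     (if a \<noteq> -\<infinity> \<and> attainable_a mu sig x0 a b then {real_of_ereal a} else {})"

definition Eright where
  "Eright mu sig x0 a b =
     (if b \<noteq> \<infinity> \<and> entrance_b mu sig x0 a b then {real_of_ereal b} else {})"

definition Espace where
  "Espace mu sig x0 a b = Iab a b \<union> Eleft mu sig x0 a b \<union> Eright mu sig x0 a b"

definition diff_setting :: "(real \<Rightarrow> real) \<Rightarrow> (real \<Rightarrow> real) \<Rightarrow> real \<Rightarrow> ereal \<Rightarrow> ereal \<Rightarrow> bool" where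
  "diff_setting mu sig x0 a b \<longleftrightarrow> a < b \<and> x0 \<in> Iab a b \<and>
     continuous_on (Iab a b) mu \<and> continuous_on (Iab a b) sig \<and>
     (\<forall>x\<in>Iab a b. sig x \<noteq> 0)"

text \<open>refl_a: the (model-specified) flag that the boundary a is a reflecting
  (regular) boundary.\<close>
definition cond_A :: "(real \<Rightarrow> real) \<Rightarrow> (real \<Rightarrow> real) \<Rightarrow> real \<Rightarrow> ereal \<Rightarrow> ereal \<Rightarrow> bool \<Rightarrow> bool" where
  "cond_A mu sig x0 a b refl_a \<longleftrightarrow>
     (\<forall>x\<in>Iab a b. Smeas mu sig x0 {v\<in>Iab a b. v \<le> x} < \<infinity>) \<and>
     (\<forall>x\<in>Iab a b. Smeas mu sig x0 {v\<in>Iab a b. x \<le> v} = \<infinity>) \<and>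
     (refl_a \<longrightarrow> regular_a mu sig x0 a b \<and>
        (\<exists>L<\<infinity>. ((\<lambda>x. ennreal (sdens mu sig x0 x) * Mmeas mu sig x0 {v\<in>Iab a b. x \<le> v})
                  \<longlongrightarrow> L) (at_left_end a))) \<and>
     (natural_b mu sig x0 a b \<longrightarrow> (\<forall>y\<in>Iab a b. Mmeas mu sig x0 {v\<in>Iab a b. y \<le> v} < \<infinity>)) \<and>
     (a = -\<infinity> \<longrightarrow> natural_a mu sig x0 a b) \<and>
     (b = \<infinity> \<longrightarrow> natural_b mu sig x0 a b)"

definition cond_B :: "(real \<Rightarrow> real) \<Rightarrow> (real \<Rightarrow> real) \<Rightarrow> real \<Rightarrow> ereal \<Rightarrow> ereal \<Rightarrow> bool
     \<Rightarrow> (real \<Rightarrow> real) \<Rightarrow> (real \<Rightarrow> real \<Rightarrow> ereal) \<Rightarrow> real \<Rightarrow> bool" where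
  "cond_B mu sig x0 a b refl_a c0 c1 k1 \<longleftrightarrow>
     (let E = Espace mu sig x0 a b; I = Iab a b in
     \<comment> \<open>(a) running cost c0\<close>
     (\<forall>x\<in>E. 0 \<le> c0 x) \<and> continuous_on E c0 \<and>
     (natural_a mu sig x0 a b \<longrightarrow>
        (\<exists>L. ((\<lambda>x. ereal (c0 x)) \<longlongrightarrow> L) (at_left_end a) \<and> (a = -\<infinity> \<longrightarrow> L = \<infinity>))) \<and>
     (natural_b mu sig x0 a b \<longrightarrow>
        (\<exists>L. ((\<lambda>x. ereal (c0 x)) \<longlongrightarrow> L) (at_right_end b) \<and> (b = \<infinity> \<longrightarrow> L = \<infinity>))) \<and>
     (\<forall>y\<in>I. (\<integral>\<^sup>+ v\<in>{v\<in>I. y \<le> v}. ennreal (c0 v * mdens mu sig x0 v) \<partial>lborel) < \<infinity>) \<and>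
     (refl_a \<longrightarrow>
        (\<exists>L<\<infinity>. ((\<lambda>x. ennreal (sdens mu sig x0 x) *
                 (\<integral>\<^sup>+ v\<in>{v\<in>I. x \<le> v}. ennreal (c0 v * mdens mu sig x0 v) \<partial>lborel))
                  \<longlongrightarrow> L) (at_left_end a))) \<and>
     \<comment> \<open>(b) switching cost c1 on {(y,z) in E^2. y <= z}\<close>
     0 < k1 \<and>
     continuous_on {(y, z). y \<in> E \<and> z \<in> E \<and> y \<le> z} (\<lambda>(y, z). c1 y z) \<and>
     (\<forall>y\<in>E. \<forall>z\<in>E. y \<le> z \<longrightarrow> ereal k1 \<le> c1 y z) \<and>
     (\<forall>z\<in>E - Eleft mu sig x0 a b. \<exists>p\<in>I. p \<le> z \<and> (\<exists>D :: real \<Rightarrow> real.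
        (\<forall>y\<in>E. y \<le> p \<longrightarrow> \<bar>c1 y z\<bar> \<noteq> \<infinity> \<and>
           ((\<lambda>t. real_of_ereal (c1 t z)) has_real_derivative D y) (at y within {t\<in>E. t \<le> p})) \<and>
        continuous_on {t\<in>E. t \<le> p} D)) \<and>
     (\<forall>y\<in>E - Eright mu sig x0 a b. \<exists>p\<in>I. y \<le> p \<and> (\<exists>D :: real \<Rightarrow> real.
        (\<forall>z\<in>E. p \<le> z \<longrightarrow> \<bar>c1 y z\<bar> \<noteq> \<infinity> \<and>
           ((\<lambda>t. real_of_ereal (c1 y t)) has_real_derivative D z) (at z within {t\<in>E. p \<le> t})) \<and>
        continuous_on {t\<in>E. p \<le> t} D)))"

definition c0tail where
  "c0tail mu sig x0 a b c0 u =
     enn2real (\<integral>\<^sup>+ v\<in>{v\<in>Iab a b. u \<le> v}. ennreal (2 * c0 v * mdens mu sig x0 v) \<partial>lborel)"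

definition Mtail where
  "Mtail mu sig x0 a b u = enn2real (Mmeas mu sig x0 {v\<in>Iab a b. u \<le> v})"

definition g0 :: "(real \<Rightarrow> real) \<Rightarrow> (real \<Rightarrow> real) \<Rightarrow> real \<Rightarrow> ereal \<Rightarrow> ereal \<Rightarrow> (real \<Rightarrow> real) \<Rightarrow> real \<Rightarrow> real" where
  "g0 mu sig x0 a b c0 x = sint (\<lambda>u. c0tail mu sig x0 a b c0 u * sdens mu sig x0 u) x0 x"

definition zeta :: "(real \<Rightarrow> real) \<Rightarrow> (real \<Rightarrow> real) \<Rightarrow> real \<Rightarrow> ereal \<Rightarrow> ereal \<Rightarrow> real \<Rightarrow> real" where
  "zeta mu sig x0 a b x = sint (\<lambda>u. 2 * Mtail mu sig x0 a b u * sdens mu sig x0 u) x0 x"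

end

theory Submission
  imports Defs
begin


lemma ereal_lt_trans1: "x \<le> w \<Longrightarrow> ereal w < (b::ereal) \<Longrightarrow> ereal x < b"
  by (meson ereal_less_eq(3) le_less_trans)
lemma ereal_lt_trans2: "w \<le> x \<Longrightarrow> (a::ereal) < ereal w \<Longrightarrow> a < ereal x"
  by (meson ereal_less_eq(3) less_le_trans)

lemma Iab_mem: "x \<in> Iab a b \<longleftrightarrow> a < ereal x \<and> ereal x < b" by (simp add: Iab_def)

lemma Iab_conv: "y \<in> Iab a b \<Longrightarrow> z \<in> Iab a b \<Longrightarrow> y \<le> t \<Longrightarrow> t \<le> z \<Longrightarrow> t \<in> Iab a b"
proof -
  assume h: "y \<in> Iab a b" "z \<in> Iab a b" "y \<le> t" "t \<le> z"
  have "a < ereal t" using ereal_lt_trans2[of y t a] h by (simp add: Iab_def)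
  moreover have "ereal t < b" using ereal_lt_trans1[of t z b] h by (simp add: Iab_def)
  ultimately show ?thesis by (simp add: Iab_def)
qed

lemma Iab_open: "open (Iab a b)"
proof -
  have "Iab a b = ereal -` {a<..<b}" by (auto simp: Iab_def)
  moreover have "open (ereal -` {a<..<b})"
    by (rule continuous_open_vimage) (auto intro: continuous_intros)
  ultimately show ?thesis by simp
qed

lemma Iab_ex_lt: "w \<in> Iab a b \<Longrightarrow> \<exists>v\<in>Iab a b. v < w"
proof -
  assume w: "w \<in> Iab a b"
  then have "a < ereal w" by (simp add: Iab_def)
  then obtain v where "a < ereal v" "ereal v < ereal w" using ereal_dense2 by blast
  moreover have "ereal v < b" using \<open>ereal v < ereal w\<close> w less_trans unfolding Iab_mem by blast
  ultimately show ?thesis by (intro bexI[of _ v]) (auto simp: Iab_mem)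
qed

lemma Iab_ex_gt: "w \<in> Iab a b \<Longrightarrow> \<exists>v\<in>Iab a b. w < v"
proof -
  assume w: "w \<in> Iab a b"
  then have "ereal w < b" by (simp add: Iab_def)
  then obtain v where "ereal w < ereal v" "ereal v < b" using ereal_dense2 by blast
  moreover have "a < ereal v" using \<open>ereal w < ereal v\<close> w less_trans unfolding Iab_mem by blast
  ultimately show ?thesis by (intro bexI[of _ v]) (auto simp: Iab_mem)
qed

lemma L_ex: assumes "a < b" "eventually P (at_left_end a)"
  shows "\<exists>w\<in>Iab a b. \<forall>u\<in>Iab a b. u < w \<longrightarrow> P u"
proof (cases "a = -\<infinity>")
  case True
  then obtain N where N: "\<forall>n<N. P n" using assms(2) by (auto simp: at_left_end_def eventually_at_bot_dense)
  obtain c where c: "-\<infinity> < ereal c" "ereal c < b" using ereal_dense2[OF assms(1)] True by auto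
  show ?thesis using N c True
    by (intro bexI[of _ "min c (N - 1)"]) (auto simp: Iab_def min_less_iff_disj)
next
  case False
  then obtain r where r: "a = ereal r" using assms(1) by (cases a) auto
  then obtain d where d: "d > r" "\<forall>y>r. y < d \<longrightarrow> P y" using assms(2)
    by (auto simp: at_left_end_def eventually_at_right_field)
  have "ereal r < min (ereal d) b" using d assms(1) r by auto
  then obtain w where w: "ereal r < ereal w" "ereal w < min (ereal d) b" using ereal_dense2 by blast
  show ?thesis using w d r by (intro bexI[of _ w]) (auto simp: Iab_def)
qed

lemma L_ev: assumes "a < b" "w \<in> Iab a b"
  shows "eventually (\<lambda>y. y \<in> Iab a b \<and> y < w) (at_left_end a)"
proof (cases "a = -\<infinity>")
  case True
  then show ?thesis using assms
    by (auto simp: at_left_end_def eventually_at_bot_dense Iab_def intro!: exI[of _ w]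
       intro: less_trans ereal_lt_trans1 ereal_lt_trans2 less_imp_le)
next
  case False
  then obtain r where r: "a = ereal r" using assms(1) by (cases a) auto
  then show ?thesis using assms
    by (auto simp: at_left_end_def eventually_at_right_field Iab_def intro!: exI[of _ w]
       intro: less_trans ereal_lt_trans1 ereal_lt_trans2 less_imp_le)
qed

lemma R_ex: assumes "a < b" "eventually P (at_right_end b)"
  shows "\<exists>w\<in>Iab a b. \<forall>u\<in>Iab a b. w < u \<longrightarrow> P u"
proof (cases "b = \<infinity>")
  case True
  then obtain N where N: "\<forall>n>N. P n" using assms(2) by (auto simp: at_right_end_def eventually_at_top_dense)
  obtain c where c: "a < ereal c" "ereal c < \<infinity>" using ereal_dense2[OF assms(1)] True by auto
  show ?thesis using N c True
    by (intro bexI[of _ "max c (N + 1)"]) (auto simp: Iab_def less_max_iff_disj)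
next
  case False
  then obtain r where r: "b = ereal r" using assms(1) by (cases b) auto
  then obtain d where d: "d < r" "\<forall>y>d. y < r \<longrightarrow> P y" using assms(2)
    by (auto simp: at_right_end_def eventually_at_left_field)
  have "max (ereal d) a < ereal r" using d assms(1) r by auto
  then obtain w where w: "max (ereal d) a < ereal w" "ereal w < ereal r" using ereal_dense2 by blast
  show ?thesis using w d r by (intro bexI[of _ w]) (auto simp: Iab_def)
qed

lemma R_ev: assumes "a < b" "w \<in> Iab a b"
  shows "eventually (\<lambda>y. y \<in> Iab a b \<and> w < y) (at_right_end b)"
proof (cases "b = \<infinity>")
  case True
  then show ?thesis using assms
    by (auto simp: at_right_end_def eventually_at_top_dense Iab_def intro!: exI[of _ w]
       intro: less_trans ereal_lt_trans1 ereal_lt_trans2 less_imp_le)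
next
  case False
  then obtain r where r: "b = ereal r" using assms(1) by (cases b) auto
  then show ?thesis using assms
    by (auto simp: at_right_end_def eventually_at_left_field Iab_def intro!: exI[of _ w]
       intro: less_trans ereal_lt_trans1 ereal_lt_trans2 less_imp_le)
qed



lemma neg_lt: "ereal (- m) < ereal ((- A - - F) / D) \<Longrightarrow> ereal ((A - F) / D) < ereal m"
proof -
  have e: "- A - - F = - (A - F)" by simp
  have "(- A - - F) / D = - ((A - F) / D)" by (simp only: e minus_divide_left)
  then show "ereal (- m) < ereal ((- A - - F) / D) \<Longrightarrow> ereal ((A - F) / D) < ereal m" by simp
qed

lemma mono_lb:
  assumes der: "\<And>x. x \<in> Iab a b \<Longrightarrow> (F has_real_derivative f x) (at x)"
    "\<And>x. x \<in> Iab a b \<Longrightarrow> (G has_real_derivative g x) (at x)"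
    and yv: "y \<in> Iab a b" "v \<in> Iab a b" "y \<le> v"
    and bd: "\<And>u. u \<in> Iab a b \<Longrightarrow> y \<le> u \<Longrightarrow> u \<le> v \<Longrightarrow> m * g u \<le> f u"
  shows "m * (G v - G y) \<le> F v - F y"
proof -
  have "(\<lambda>x. F x - m * G x) y \<le> (\<lambda>x. F x - m * G x) v"
  proof (rule DERIV_nonneg_imp_nondecreasing[OF yv(3)])
    fix x assume x: "y \<le> x" "x \<le> v"
    then have xi: "x \<in> Iab a b" using Iab_conv yv by blast
    show "\<exists>d. ((\<lambda>x. F x - m * G x) has_real_derivative d) (at x) \<and> 0 \<le> d"
      using der[OF xi] bd[OF xi x]
      by (intro exI[of _ "f x - m * g x"]) (auto intro!: derivative_eq_intros)
  qed
  then show ?thesis by (simp add: algebra_simps)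
qed

lemma G_incr:
  assumes der: "\<And>x. x \<in> Iab a b \<Longrightarrow> (G has_real_derivative g x) (at x)"
    and gpos: "\<And>x. x \<in> Iab a b \<Longrightarrow> 0 < g x"
    and yv: "y \<in> Iab a b" "v \<in> Iab a b" "y < v"
  shows "G y < G v"
proof (rule DERIV_pos_imp_increasing[OF yv(3)])
  fix x assume x: "y \<le> x" "x \<le> v"
  then have xi: "x \<in> Iab a b" using Iab_conv yv by (meson less_imp_le)
  show "\<exists>d. (G has_real_derivative d) (at x) \<and> 0 < d" using der[OF xi] gpos[OF xi] by blast
qed

lemma left_lower:
  assumes ab: "a < b"
    and der: "\<And>x. x \<in> Iab a b \<Longrightarrow> (F has_real_derivative f x) (at x)"
    "\<And>x. x \<in> Iab a b \<Longrightarrow> (G has_real_derivative g x) (at x)"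
    and gpos: "\<And>x. x \<in> Iab a b \<Longrightarrow> 0 < g x"
    and lim: "((\<lambda>u. ereal (f u / g u)) \<longlongrightarrow> L) (at_left_end a)"
    and Gbot: "filterlim G at_bot (at_left_end a)"
    and m: "ereal m < L"
  shows "eventually (\<lambda>y. ereal m < ereal ((A - F y) / (B - G y))) (at_left_end a)"
proof -
  obtain m1 where m1: "ereal m < ereal m1" "ereal m1 < L" using ereal_dense2[OF m] by blast
  have "eventually (\<lambda>u. ereal m1 < ereal (f u / g u)) (at_left_end a)"
    using order_tendstoD(1)[OF lim m1(2)] .
  then obtain w where w: "w \<in> Iab a b" "\<forall>u\<in>Iab a b. u < w \<longrightarrow> ereal m1 < ereal (f u / g u)"
    using L_ex[OF ab] by blast
  obtain w2 where w2: "w2 \<in> Iab a b" "w2 < w" using Iab_ex_lt[OF w(1)] by blast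
  have fb: "m1 * g u \<le> f u" if "u \<in> Iab a b" "u \<le> w2" for u
  proof -
    have "m1 < f u / g u" using w(2) that w2 by auto
    then show ?thesis using gpos[OF that(1)] by (simp add: pos_less_divide_eq)
  qed
  define C where "C = A - F w2 - m1 * (B - G w2)"
  have dm: "0 < m1 - m" using m1 by simp
  have ev1: "eventually (\<lambda>y. y \<in> Iab a b \<and> y < w2) (at_left_end a)" using L_ev[OF ab w2(1)] .
  have ev2: "eventually (\<lambda>y. G y \<le> B - \<bar>C\<bar> / (m1 - m) - 1) (at_left_end a)"
    using Gbot by (simp add: filterlim_at_bot)
  show ?thesis using ev1 ev2
  proof eventually_elim
    case (elim y)
    have "m1 * (G w2 - G y) \<le> F w2 - F y"
      by (rule mono_lb[OF der, where y=y and v=w2]) (use elim w2 fb in auto)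
    then have ge: "A - F y \<ge> m1 * (B - G y) + C" unfolding C_def by (simp add: algebra_simps)
    define D where "D = B - G y"
    have D: "D \<ge> \<bar>C\<bar> / (m1 - m) + 1" using elim unfolding D_def by simp
    have Dpos: "D > 0" using D dm by (smt (verit) divide_nonneg_pos abs_ge_zero)
    have "\<bar>C\<bar> / (m1 - m) < D" using D by simp
    then have "\<bar>C\<bar> < D * (m1 - m)" using dm by (simp add: pos_divide_less_eq)
    then have "m * D < A - F y" using ge unfolding D_def[symmetric]
      by (smt (verit, best) abs_ge_self abs_minus_cancel right_diff_distrib mult.commute)
    then have "m < (A - F y) / D" using Dpos by (simp add: pos_less_divide_eq)
    then show ?case unfolding D_def by simp
  qed
qed

lemma left_lim:
  assumes ab: "a < b"
    and der: "\<And>x. x \<in> Iab a b \<Longrightarrow> (F has_real_derivative f x) (at x)"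
    "\<And>x. x \<in> Iab a b \<Longrightarrow> (G has_real_derivative g x) (at x)"
    and gpos: "\<And>x. x \<in> Iab a b \<Longrightarrow> 0 < g x"
    and lim: "((\<lambda>u. ereal (f u / g u)) \<longlongrightarrow> L) (at_left_end a)"
    and Gbot: "filterlim G at_bot (at_left_end a)"
  shows "((\<lambda>y. ereal ((A - F y) / (B - G y))) \<longlongrightarrow> L) (at_left_end a)"
proof (rule order_tendstoI)
  fix M assume M: "M < L"
  show "eventually (\<lambda>y. M < ereal ((A - F y) / (B - G y))) (at_left_end a)"
  proof (cases M)
    case (real m)
    then show ?thesis using left_lower[OF ab der gpos lim Gbot, of m A B] M by simp
  qed (use M in auto)
next
  fix M assume M: "L < M"
  show "eventually (\<lambda>y. ereal ((A - F y) / (B - G y)) < M) (at_left_end a)"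
  proof (cases M)
    case (real m)
    have der': "\<And>x. x \<in> Iab a b \<Longrightarrow> ((\<lambda>x. - F x) has_real_derivative - f x) (at x)"
      using der(1) by (auto intro!: derivative_eq_intros)
    have lim': "((\<lambda>u. ereal (- f u / g u)) \<longlongrightarrow> - L) (at_left_end a)"
      using tendsto_uminus_ereal[OF lim] by simp
    have mL: "ereal (- m) < - L" using M real by (simp add: ereal_less_uminus_reorder)
    have ev: "eventually (\<lambda>y. ereal (- m) < ereal ((- A - - F y) / (B - G y))) (at_left_end a)"
      using left_lower[OF ab der' der(2) gpos lim' Gbot mL, of "- A" B] by simp
    show ?thesis unfolding real
      by (rule eventually_mono[OF ev]) (erule neg_lt)
  qed (use M in auto)
qed

lemma left_lim2:
  assumes ab: "a < b"
    and der: "\<And>x. x \<in> Iab a b \<Longrightarrow> (F has_real_derivative f x) (at x)"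
    "\<And>x. x \<in> Iab a b \<Longrightarrow> (G has_real_derivative g x) (at x)"
    and gpos: "\<And>x. x \<in> Iab a b \<Longrightarrow> 0 < g x"
    and lim: "((\<lambda>u. ereal (f u / g u)) \<longlongrightarrow> L) (at_left_end a)"
  shows "((\<lambda>(y, z). ereal ((F z - F y) / (G z - G y))) \<longlongrightarrow> L)
     (inf (at_left_end a \<times>\<^sub>F at_left_end a) (principal {(y, z). y < z}))"
proof -
  have key: "eventually (\<lambda>(y, z). ereal m < ereal ((F z - F y) / (G z - G y)))
     (inf (at_left_end a \<times>\<^sub>F at_left_end a) (principal {(y, z). y < z}))"
    if der: "\<And>x. x \<in> Iab a b \<Longrightarrow> (F has_real_derivative f x) (at x)"
      and lim: "((\<lambda>u. ereal (f u / g u)) \<longlongrightarrow> L) (at_left_end a)"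
      and m: "ereal m < L" for F f L m
  proof -
    obtain m1 where m1: "ereal m < ereal m1" "ereal m1 < L" using ereal_dense2[OF m] by blast
    have "eventually (\<lambda>u. ereal m1 < ereal (f u / g u)) (at_left_end a)"
      using order_tendstoD(1)[OF lim m1(2)] .
    then obtain w where w: "w \<in> Iab a b" "\<forall>u\<in>Iab a b. u < w \<longrightarrow> ereal m1 < ereal (f u / g u)"
      using L_ex[OF ab] by blast
    have fb: "m1 * g u \<le> f u" if "u \<in> Iab a b" "u < w" for u
    proof -
      have "m1 < f u / g u" using w(2) that by auto
      then show ?thesis using gpos[OF that(1)] by (simp add: pos_less_divide_eq)
    qed
    have ev1: "eventually (\<lambda>y. y \<in> Iab a b \<and> y < w) (at_left_end a)" using L_ev[OF ab w(1)] .
    have "eventually (\<lambda>(y, z). ereal m < ereal ((F z - F y) / (G z - G y))) (at_left_end a \<times>\<^sub>F at_left_end a)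
      \<or> True" by simp
    have "\<forall>\<^sub>F p in at_left_end a \<times>\<^sub>F at_left_end a. p \<in> {(y, z). y < z} \<longrightarrow>
           (\<lambda>(y, z). ereal m < ereal ((F z - F y) / (G z - G y))) p"
      unfolding eventually_prod_same
    proof (intro exI conjI allI impI)
      show "eventually (\<lambda>y. y \<in> Iab a b \<and> y < w) (at_left_end a)" by (rule ev1)
      fix y z assume y: "y \<in> Iab a b \<and> y < w" and z: "z \<in> Iab a b \<and> z < w"
        and yz: "(y, z) \<in> {(y, z). y < z}"
      then have yz': "y < z" by simp
      have "m1 * (G z - G y) \<le> F z - F y"
        by (rule mono_lb[OF der assms(3), where y=y and v=z]) (use y z yz' fb in auto)
      moreover have "G y < G z" using G_incr[OF assms(3) gpos, where y=y and v=z] y z yz' by auto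
      ultimately have "m1 \<le> (F z - F y) / (G z - G y)" by (simp add: pos_le_divide_eq mult.commute)
      then show "(\<lambda>(y, z). ereal m < ereal ((F z - F y) / (G z - G y))) (y, z)"
        using m1 by simp
    qed
    then show ?thesis by (simp add: eventually_inf_principal)
  qed
  show ?thesis
  proof (rule order_tendstoI)
    fix M assume M: "M < L"
    show "eventually (\<lambda>p. M < (\<lambda>(y, z). ereal ((F z - F y) / (G z - G y))) p)
       (inf (at_left_end a \<times>\<^sub>F at_left_end a) (principal {(y, z). y < z}))"
    proof (cases M)
      case (real m)
      then show ?thesis using key[OF der(1) lim, of m] M by (simp add: case_prod_unfold)
    qed (use M in \<open>auto simp: case_prod_unfold\<close>)
  next
    fix M assume M: "L < M"
    show "eventually (\<lambda>p. (\<lambda>(y, z). ereal ((F z - F y) / (G z - G y))) p < M)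
       (inf (at_left_end a \<times>\<^sub>F at_left_end a) (principal {(y, z). y < z}))"
    proof (cases M)
      case (real m)
      have der': "\<And>x. x \<in> Iab a b \<Longrightarrow> ((\<lambda>x. - F x) has_real_derivative - f x) (at x)"
        using der(1) by (auto intro!: derivative_eq_intros)
      have lim': "((\<lambda>u. ereal (- f u / g u)) \<longlongrightarrow> - L) (at_left_end a)"
        using tendsto_uminus_ereal[OF lim] by simp
      have "ereal (- m) < - L" using M real by (simp add: ereal_less_uminus_reorder)
      note ev = key[OF der' lim' this]
      show ?thesis unfolding real
        proof (rule eventually_mono[OF ev])
          fix p :: "real \<times> real"
          assume "(\<lambda>(y, z). ereal (- m) < ereal ((- F z - - F y) / (G z - G y))) p"
          then show "(\<lambda>(y, z). ereal ((F z - F y) / (G z - G y))) p < ereal m"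
            by (cases p) (simp only: prod.case, erule neg_lt)
        qed
    qed (use M in \<open>auto simp: case_prod_unfold\<close>)
  qed
qed



lemma right_lower:
  assumes ab: "a < b"
    and der: "\<And>x. x \<in> Iab a b \<Longrightarrow> (F has_real_derivative f x) (at x)"
    "\<And>x. x \<in> Iab a b \<Longrightarrow> (G has_real_derivative g x) (at x)"
    and gpos: "\<And>x. x \<in> Iab a b \<Longrightarrow> 0 < g x"
    and lim: "((\<lambda>u. ereal (f u / g u)) \<longlongrightarrow> L) (at_right_end b)"
    and Gtop: "filterlim G at_top (at_right_end b)"
    and m: "ereal m < L"
  shows "eventually (\<lambda>z. ereal m < ereal ((F z - A) / (G z - B))) (at_right_end b)"
proof -
  obtain m1 where m1: "ereal m < ereal m1" "ereal m1 < L" using ereal_dense2[OF m] by blast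
  have "eventually (\<lambda>u. ereal m1 < ereal (f u / g u)) (at_right_end b)"
    using order_tendstoD(1)[OF lim m1(2)] .
  then obtain w where w: "w \<in> Iab a b" "\<forall>u\<in>Iab a b. w < u \<longrightarrow> ereal m1 < ereal (f u / g u)"
    using R_ex[OF ab] by blast
  obtain w2 where w2: "w2 \<in> Iab a b" "w < w2" using Iab_ex_gt[OF w(1)] by blast
  have fb: "m1 * g u \<le> f u" if "u \<in> Iab a b" "w2 \<le> u" for u
  proof -
    have "m1 < f u / g u" using w(2) that w2 by auto
    then show ?thesis using gpos[OF that(1)] by (simp add: pos_less_divide_eq)
  qed
  define C where "C = F w2 - A - m1 * (G w2 - B)"
  have dm: "0 < m1 - m" using m1 by simp
  have ev1: "eventually (\<lambda>y. y \<in> Iab a b \<and> w2 < y) (at_right_end b)" using R_ev[OF ab w2(1)] .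
  have ev2: "eventually (\<lambda>y. G y \<ge> B + \<bar>C\<bar> / (m1 - m) + 1) (at_right_end b)"
    using Gtop by (simp add: filterlim_at_top)
  show ?thesis using ev1 ev2
  proof eventually_elim
    case (elim y)
    have "m1 * (G y - G w2) \<le> F y - F w2"
      by (rule mono_lb[OF der, where y=w2 and v=y]) (use elim w2 fb in auto)
    then have ge: "F y - A \<ge> m1 * (G y - B) + C" unfolding C_def by (simp add: algebra_simps)
    define D where "D = G y - B"
    have D: "D \<ge> \<bar>C\<bar> / (m1 - m) + 1" using elim unfolding D_def by simp
    have Dpos: "D > 0" using D dm by (smt (verit) divide_nonneg_pos abs_ge_zero)
    have "\<bar>C\<bar> / (m1 - m) < D" using D by simp
    then have "\<bar>C\<bar> < D * (m1 - m)" using dm by (simp add: pos_divide_less_eq)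
    then have "m * D < F y - A" using ge unfolding D_def[symmetric]
      by (smt (verit, best) abs_ge_self abs_minus_cancel right_diff_distrib mult.commute)
    then have "m < (F y - A) / D" using Dpos by (simp add: pos_less_divide_eq)
    then show ?case unfolding D_def by simp
  qed
qed

lemma right_lim:
  assumes ab: "a < b"
    and der: "\<And>x. x \<in> Iab a b \<Longrightarrow> (F has_real_derivative f x) (at x)"
    "\<And>x. x \<in> Iab a b \<Longrightarrow> (G has_real_derivative g x) (at x)"
    and gpos: "\<And>x. x \<in> Iab a b \<Longrightarrow> 0 < g x"
    and lim: "((\<lambda>u. ereal (f u / g u)) \<longlongrightarrow> L) (at_right_end b)"
    and Gtop: "filterlim G at_top (at_right_end b)"
  shows "((\<lambda>z. ereal ((F z - A) / (G z - B))) \<longlongrightarrow> L) (at_right_end b)"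
proof (rule order_tendstoI)
  fix M assume M: "M < L"
  show "eventually (\<lambda>z. M < ereal ((F z - A) / (G z - B))) (at_right_end b)"
  proof (cases M)
    case (real m)
    then show ?thesis using right_lower[OF ab der gpos lim Gtop, of m A B] M by simp
  qed (use M in auto)
next
  fix M assume M: "L < M"
  show "eventually (\<lambda>z. ereal ((F z - A) / (G z - B)) < M) (at_right_end b)"
  proof (cases M)
    case (real m)
    have der': "\<And>x. x \<in> Iab a b \<Longrightarrow> ((\<lambda>x. - F x) has_real_derivative - f x) (at x)"
      using der(1) by (auto intro!: derivative_eq_intros)
    have lim': "((\<lambda>u. ereal (- f u / g u)) \<longlongrightarrow> - L) (at_right_end b)"
      using tendsto_uminus_ereal[OF lim] by simp
    have mL: "ereal (- m) < - L" using M real by (simp add: ereal_less_uminus_reorder)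
    have ev: "eventually (\<lambda>z. ereal (- m) < ereal ((- F z - - A) / (G z - B))) (at_right_end b)"
      using right_lower[OF ab der' der(2) gpos lim' Gtop mL, of "- A" B] by simp
    show ?thesis unfolding real
      by (rule eventually_mono[OF ev]) (erule neg_lt)
  qed (use M in auto)
qed

lemma right_lim2:
  assumes ab: "a < b"
    and der: "\<And>x. x \<in> Iab a b \<Longrightarrow> (F has_real_derivative f x) (at x)"
    "\<And>x. x \<in> Iab a b \<Longrightarrow> (G has_real_derivative g x) (at x)"
    and gpos: "\<And>x. x \<in> Iab a b \<Longrightarrow> 0 < g x"
    and lim: "((\<lambda>u. ereal (f u / g u)) \<longlongrightarrow> L) (at_right_end b)"
  shows "((\<lambda>(y, z). ereal ((F z - F y) / (G z - G y))) \<longlongrightarrow> L)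
     (inf (at_right_end b \<times>\<^sub>F at_right_end b) (principal {(y, z). y < z}))"
proof -
  have key: "eventually (\<lambda>(y, z). ereal m < ereal ((F z - F y) / (G z - G y)))
     (inf (at_right_end b \<times>\<^sub>F at_right_end b) (principal {(y, z). y < z}))"
    if der: "\<And>x. x \<in> Iab a b \<Longrightarrow> (F has_real_derivative f x) (at x)"
      and lim: "((\<lambda>u. ereal (f u / g u)) \<longlongrightarrow> L) (at_right_end b)"
      and m: "ereal m < L" for F f L m
  proof -
    obtain m1 where m1: "ereal m < ereal m1" "ereal m1 < L" using ereal_dense2[OF m] by blast
    have "eventually (\<lambda>u. ereal m1 < ereal (f u / g u)) (at_right_end b)"
      using order_tendstoD(1)[OF lim m1(2)] .
    then obtain w where w: "w \<in> Iab a b" "\<forall>u\<in>Iab a b. w < u \<longrightarrow> ereal m1 < ereal (f u / g u)"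
      using R_ex[OF ab] by blast
    have fb: "m1 * g u \<le> f u" if "u \<in> Iab a b" "w < u" for u
    proof -
      have "m1 < f u / g u" using w(2) that by auto
      then show ?thesis using gpos[OF that(1)] by (simp add: pos_less_divide_eq)
    qed
    have ev1: "eventually (\<lambda>y. y \<in> Iab a b \<and> w < y) (at_right_end b)" using R_ev[OF ab w(1)] .
    have "\<forall>\<^sub>F p in at_right_end b \<times>\<^sub>F at_right_end b. p \<in> {(y, z). y < z} \<longrightarrow>
           (\<lambda>(y, z). ereal m < ereal ((F z - F y) / (G z - G y))) p"
      unfolding eventually_prod_same
    proof (intro exI conjI allI impI)
      show "eventually (\<lambda>y. y \<in> Iab a b \<and> w < y) (at_right_end b)" by (rule ev1)
      fix y z assume y: "y \<in> Iab a b \<and> w < y" and z: "z \<in> Iab a b \<and> w < z"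
        and yz: "(y, z) \<in> {(y, z). y < z}"
      then have yz': "y < z" by simp
      have "m1 * (G z - G y) \<le> F z - F y"
        by (rule mono_lb[OF der assms(3), where y=y and v=z]) (use y z yz' fb in auto)
      moreover have "G y < G z" using G_incr[OF assms(3) gpos, where y=y and v=z] y z yz' by auto
      ultimately have "m1 \<le> (F z - F y) / (G z - G y)" by (simp add: pos_le_divide_eq mult.commute)
      then show "(\<lambda>(y, z). ereal m < ereal ((F z - F y) / (G z - G y))) (y, z)"
        using m1 by simp
    qed
    then show ?thesis by (simp add: eventually_inf_principal)
  qed
  show ?thesis
  proof (rule order_tendstoI)
    fix M assume M: "M < L"
    show "eventually (\<lambda>p. M < (\<lambda>(y, z). ereal ((F z - F y) / (G z - G y))) p)
       (inf (at_right_end b \<times>\<^sub>F at_right_end b) (principal {(y, z). y < z}))"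
    proof (cases M)
      case (real m)
      then show ?thesis using key[OF der(1) lim, of m] M by (simp add: case_prod_unfold)
    qed (use M in \<open>auto simp: case_prod_unfold\<close>)
  next
    fix M assume M: "L < M"
    show "eventually (\<lambda>p. (\<lambda>(y, z). ereal ((F z - F y) / (G z - G y))) p < M)
       (inf (at_right_end b \<times>\<^sub>F at_right_end b) (principal {(y, z). y < z}))"
    proof (cases M)
      case (real m)
      have der': "\<And>x. x \<in> Iab a b \<Longrightarrow> ((\<lambda>x. - F x) has_real_derivative - f x) (at x)"
        using der(1) by (auto intro!: derivative_eq_intros)
      have lim': "((\<lambda>u. ereal (- f u / g u)) \<longlongrightarrow> - L) (at_right_end b)"
        using tendsto_uminus_ereal[OF lim] by simp
      have "ereal (- m) < - L" using M real by (simp add: ereal_less_uminus_reorder)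
      note ev = key[OF der' lim' this]
      show ?thesis unfolding real
        proof (rule eventually_mono[OF ev])
          fix p :: "real \<times> real"
          assume "(\<lambda>(y, z). ereal (- m) < ereal ((- F z - - F y) / (G z - G y))) p"
          then show "(\<lambda>(y, z). ereal ((F z - F y) / (G z - G y))) p < ereal m"
            by (cases p) (simp only: prod.case, erule neg_lt)
        qed
    qed (use M in \<open>auto simp: case_prod_unfold\<close>)
  qed
qed



lemma Iab_sub: "c \<in> Iab a b \<Longrightarrow> d \<in> Iab a b \<Longrightarrow> {c..d} \<subseteq> Iab a b"
proof
  fix t assume c: "c \<in> Iab a b" and d: "d \<in> Iab a b" and t: "t \<in> {c..d}"
  then show "t \<in> Iab a b" using Iab_conv[OF c d, of t] by simp
qed

lemma sint_eq:
  fixes k :: "real \<Rightarrow> real"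
  assumes int: "k integrable_on {c..d}" and uv: "c \<le> u" "c \<le> v" "u \<le> d" "v \<le> d"
  shows "sint k u v = integral {c..v} k - integral {c..u} k"
proof (cases "u \<le> v")
  case True
  have "k integrable_on {c..v}" by (rule integrable_on_subinterval[OF int]) (use uv in auto)
  then have "integral {c..u} k + integral {u..v} k = integral {c..v} k"
    using Henstock_Kurzweil_Integration.integral_combine[where a=c and c=u and b=v and f=k] True uv by simp
  then show ?thesis using True by (simp add: sint_def)
next
  case False
  have "k integrable_on {c..u}" by (rule integrable_on_subinterval[OF int]) (use uv in auto)
  then have "integral {c..v} k + integral {v..u} k = integral {c..u} k"
    using Henstock_Kurzweil_Integration.integral_combine[where a=c and c=v and b=u and f=k] False uv by simp
  then show ?thesis using False by (simp add: sint_def)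
qed

lemma sint_deriv:
  fixes k :: "real \<Rightarrow> real"
  assumes cont: "continuous_on (Iab a b) k" and x0: "x0 \<in> Iab a b" and x: "x \<in> Iab a b"
  shows "((\<lambda>t. sint k x0 t) has_real_derivative k x) (at x)"
proof -
  have "min x x0 \<in> Iab a b" using x x0 by (simp add: min_def)
  then obtain c where c: "c \<in> Iab a b" "c < min x x0" using Iab_ex_lt by blast
  have "max x x0 \<in> Iab a b" using x x0 by (simp add: max_def)
  then obtain d where d: "d \<in> Iab a b" "max x x0 < d" using Iab_ex_gt by blast
  have sub: "{c..d} \<subseteq> Iab a b" using Iab_sub c d by blast
  have cd: "continuous_on {c..d} k" using continuous_on_subset[OF cont sub] .
  have int: "k integrable_on {c..d}" using integrable_continuous_interval[OF cd] .
  have "((\<lambda>t. integral {c..t} k) has_real_derivative k x) (at x within {c..d})"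
    using integral_has_real_derivative[OF cd, of x] c d by simp
  moreover have "at x within {c..d} = at x"
    using c d by (intro at_within_interior) simp
  ultimately have D: "((\<lambda>t. integral {c..t} k - integral {c..x0} k) has_real_derivative k x) (at x)"
    by (auto intro!: derivative_eq_intros)
  show ?thesis
  proof (rule has_field_derivative_transform_within_open[OF D, of "{c<..<d}"])
    show "x \<in> {c<..<d}" using c d by simp
    fix t assume t: "t \<in> {c<..<d}"
    show "integral {c..t} k - integral {c..x0} k = sint k x0 t"
      using sint_eq[OF int, of x0 t] t c d by simp
  qed simp
qed

lemma sint_self: "sint k x x = 0" by (simp add: sint_def)



lemma hr_meas:
  assumes "continuous_on (Iab a b) h"
  shows "(\<lambda>x. ennreal (indicator (Iab a b) x * h x)) \<in> borel_measurable lborel"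
proof -
  have "(\<lambda>x. indicator (Iab a b) x *\<^sub>R h x) \<in> borel_measurable borel"
    using borel_measurable_continuous_on_indicator[OF _ assms] Iab_open by auto
  then show ?thesis by simp
qed

lemma setint_restr:
  assumes "A \<subseteq> Iab a b"
  shows "(\<integral>\<^sup>+x\<in>A. ennreal (h x) \<partial>lborel) = (\<integral>\<^sup>+x\<in>A. ennreal (indicator (Iab a b) x * h x) \<partial>lborel)"
  using assms by (intro nn_integral_cong) (auto split: split_indicator)

lemma int_Icc:
  assumes hc: "continuous_on (Iab a b) h" and hnn: "\<And>x. x \<in> Iab a b \<Longrightarrow> 0 \<le> h x"
    and c: "c \<in> Iab a b" and z: "z \<in> Iab a b"
  shows "(\<integral>\<^sup>+x\<in>{c..z}. ennreal (h x) \<partial>lborel) = ennreal (integral {c..z} h)"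
proof -
  have sub: "{c..z} \<subseteq> Iab a b" using Iab_sub c z by blast
  have "h integrable_on {c..z}"
    using integrable_continuous_interval[OF continuous_on_subset[OF hc sub]] .
  then have hi: "(h has_integral integral {c..z} h) {c..z}" by (simp add: has_integral_integral)
  have nn: "\<And>x. x \<in> {c..z} \<Longrightarrow> 0 \<le> h x" using hnn sub by auto
  show ?thesis by (rule nn_integral_has_integral_lebesgue'[OF nn hi])
qed

lemma Iab_ge_sets: "{x \<in> Iab a b. v \<le> x} \<in> sets borel"
proof -
  have "{x \<in> Iab a b. v \<le> x} = Iab a b \<inter> {v..}" by auto
  then show ?thesis using Iab_open by (auto intro!: sets.Int borel_open borel_closed)
qed

lemma Iab_le_sets: "{x \<in> Iab a b. x \<le> v} \<in> sets borel"
proof -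
  have "{x \<in> Iab a b. x \<le> v} = Iab a b \<inter> {..v}" by auto
  then show ?thesis using Iab_open by (auto intro!: sets.Int borel_open borel_closed)
qed

lemma tail_split:
  assumes hc: "continuous_on (Iab a b) h" and hnn: "\<And>x. x \<in> Iab a b \<Longrightarrow> 0 \<le> h x"
    and u: "u \<in> Iab a b" and v: "v \<in> Iab a b" and uv: "u \<le> v"
  shows "(\<integral>\<^sup>+x\<in>{x\<in>Iab a b. u \<le> x}. ennreal (h x) \<partial>lborel)
       = ennreal (integral {u..v} h) + (\<integral>\<^sup>+x\<in>{x\<in>Iab a b. v \<le> x}. ennreal (h x) \<partial>lborel)"
proof -
  let ?h = "\<lambda>x. ennreal (indicator (Iab a b) x * h x)"
  have sub: "{u..v} \<subseteq> Iab a b" using Iab_sub u v by blast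
  have eq: "{x\<in>Iab a b. u \<le> x} = {u..<v} \<union> {x\<in>Iab a b. v \<le> x}" using sub uv by auto
  have "(\<integral>\<^sup>+x\<in>{x\<in>Iab a b. u \<le> x}. ennreal (h x) \<partial>lborel) = (\<integral>\<^sup>+x\<in>{x\<in>Iab a b. u \<le> x}. ?h x \<partial>lborel)"
    by (rule setint_restr) auto
  also have "\<dots> = (\<integral>\<^sup>+x\<in>{u..<v}. ?h x \<partial>lborel) + (\<integral>\<^sup>+x\<in>{x\<in>Iab a b. v \<le> x}. ?h x \<partial>lborel)"
    unfolding eq by (rule nn_integral_disjoint_pair[OF hr_meas[OF hc]]) (auto intro: Iab_ge_sets)
  also have "(\<integral>\<^sup>+x\<in>{u..<v}. ?h x \<partial>lborel) = (\<integral>\<^sup>+x\<in>{u..v}. ?h x \<partial>lborel)"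
  proof (rule nn_integral_null_delta)
    have sd: "({u..<v} - {u..v}) \<union> ({u..v} - {u..<v}) \<subseteq> {v}" by auto
    have nv: "{v} \<in> null_sets lborel" by (rule finite_imp_null_set_lborel) simp
    show "({u..<v} - {u..v}) \<union> ({u..v} - {u..<v}) \<in> null_sets lborel"
      by (rule null_sets_subset[OF nv _ sd]) simp
  qed auto
  also have "\<dots> = (\<integral>\<^sup>+x\<in>{u..v}. ennreal (h x) \<partial>lborel)"
    by (rule setint_restr[symmetric]) (rule sub)
  also have "\<dots> = ennreal (integral {u..v} h)" by (rule int_Icc[OF hc hnn u v])
  also have "(\<integral>\<^sup>+x\<in>{x\<in>Iab a b. v \<le> x}. ?h x \<partial>lborel) = (\<integral>\<^sup>+x\<in>{x\<in>Iab a b. v \<le> x}. ennreal (h x) \<partial>lborel)"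
    by (rule setint_restr[symmetric]) auto
  finally show ?thesis .
qed



definition tailf :: "ereal \<Rightarrow> ereal \<Rightarrow> (real \<Rightarrow> real) \<Rightarrow> real \<Rightarrow> real" where
  "tailf a b h u = enn2real (\<integral>\<^sup>+x\<in>{x\<in>Iab a b. u \<le> x}. ennreal (h x) \<partial>lborel)"

lemma tail_diff:
  assumes hc: "continuous_on (Iab a b) h" and hnn: "\<And>x. x \<in> Iab a b \<Longrightarrow> 0 \<le> h x"
    and fin: "\<And>u. u \<in> Iab a b \<Longrightarrow> (\<integral>\<^sup>+x\<in>{x\<in>Iab a b. u \<le> x}. ennreal (h x) \<partial>lborel) < \<infinity>"
    and u: "u \<in> Iab a b" and v: "v \<in> Iab a b" and uv: "u \<le> v"
  shows "tailf a b h u = integral {u..v} h + tailf a b h v"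
proof -
  have sub: "{u..v} \<subseteq> Iab a b" using Iab_sub u v by blast
  have "0 \<le> integral {u..v} h"
    by (rule integral_nonneg) (use integrable_continuous_interval[OF continuous_on_subset[OF hc sub]] hnn sub in auto)
  moreover have e: "(\<integral>\<^sup>+x\<in>{x\<in>Iab a b. u \<le> x}. ennreal (h x) \<partial>lborel)
       = ennreal (integral {u..v} h) + (\<integral>\<^sup>+x\<in>{x\<in>Iab a b. v \<le> x}. ennreal (h x) \<partial>lborel)"
    by (rule tail_split[OF hc hnn u v uv])
  moreover have "enn2real (ennreal (integral {u..v} h) + (\<integral>\<^sup>+x\<in>{x\<in>Iab a b. v \<le> x}. ennreal (h x) \<partial>lborel))
     = enn2real (ennreal (integral {u..v} h)) + enn2real (\<integral>\<^sup>+x\<in>{x\<in>Iab a b. v \<le> x}. ennreal (h x) \<partial>lborel)"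
    by (rule enn2real_plus) (use fin[OF v] in auto)
  ultimately show ?thesis unfolding tailf_def by simp
qed

lemma tail_sint:
  assumes hc: "continuous_on (Iab a b) h" and hnn: "\<And>x. x \<in> Iab a b \<Longrightarrow> 0 \<le> h x"
    and fin: "\<And>u. u \<in> Iab a b \<Longrightarrow> (\<integral>\<^sup>+x\<in>{x\<in>Iab a b. u \<le> x}. ennreal (h x) \<partial>lborel) < \<infinity>"
    and x0: "x0 \<in> Iab a b" and u: "u \<in> Iab a b"
  shows "tailf a b h u = tailf a b h x0 - sint h x0 u"
proof (cases "x0 \<le> u")
  case True
  show ?thesis using tail_diff[OF hc hnn fin x0 u True] True by (simp add: sint_def)
next
  case False
  show ?thesis using tail_diff[OF hc hnn fin u x0] False by (simp add: sint_def)
qed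

lemma tail_deriv:
  assumes hc: "continuous_on (Iab a b) h" and hnn: "\<And>x. x \<in> Iab a b \<Longrightarrow> 0 \<le> h x"
    and fin: "\<And>u. u \<in> Iab a b \<Longrightarrow> (\<integral>\<^sup>+x\<in>{x\<in>Iab a b. u \<le> x}. ennreal (h x) \<partial>lborel) < \<infinity>"
    and x0: "x0 \<in> Iab a b" and u: "u \<in> Iab a b"
  shows "(tailf a b h has_real_derivative - h u) (at u)"
proof -
  have "((\<lambda>t. tailf a b h x0 - sint h x0 t) has_real_derivative - h u) (at u)"
    using sint_deriv[OF hc x0 u] by (auto intro!: derivative_eq_intros)
  then show ?thesis
    by (rule has_field_derivative_transform_within_open[OF _ Iab_open u])
       (simp add: tail_sint[OF hc hnn fin x0])
qed

lemma tail_nonneg: "0 \<le> tailf a b h u" by (simp add: tailf_def)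



lemma div_right:
  assumes ab: "a < b" and hc: "continuous_on (Iab a b) h" and hnn: "\<And>x. x \<in> Iab a b \<Longrightarrow> 0 \<le> h x"
    and c: "c \<in> Iab a b"
    and inf: "(\<integral>\<^sup>+x\<in>{x\<in>Iab a b. c \<le> x}. ennreal (h x) \<partial>lborel) = \<infinity>"
  shows "filterlim (\<lambda>z. integral {c..z} h) at_top (at_right_end b)"
proof -
  let ?P = "\<lambda>z. integral {c..z} h"
  have mono: "?P z1 \<le> ?P z2" if "z1 \<in> Iab a b" "z2 \<in> Iab a b" "c \<le> z1" "z1 \<le> z2" for z1 z2
  proof -
    have sub: "{c..z2} \<subseteq> Iab a b" using Iab_sub c that by blast
    have int: "h integrable_on {c..z2}"
      using integrable_continuous_interval[OF continuous_on_subset[OF hc sub]] .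
    have "?P z1 + integral {z1..z2} h = ?P z2" using Henstock_Kurzweil_Integration.integral_combine[OF that(3,4) int] .
    moreover have "0 \<le> integral {z1..z2} h"
    proof (rule integral_nonneg)
      show "h integrable_on {z1..z2}" by (rule integrable_on_subinterval[OF int]) (use that in auto)
      fix x assume "x \<in> {z1..z2}"
      then have "x \<in> Iab a b" using sub that by auto
      then show "0 \<le> h x" by (rule hnn)
    qed
    ultimately show ?thesis by simp
  qed
  show ?thesis unfolding filterlim_at_top
  proof (intro allI, rule ccontr)
    fix K assume nev: "\<not> eventually (\<lambda>z. K \<le> ?P z) (at_right_end b)"
    have bd: "?P z < K" if z: "z \<in> Iab a b" "c \<le> z" for z
    proof (rule ccontr)
      assume "\<not> ?P z < K"
      then have "K \<le> ?P z" by simp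
      have "eventually (\<lambda>y. y \<in> Iab a b \<and> z < y) (at_right_end b)" using R_ev[OF ab z(1)] .
      then have "eventually (\<lambda>y. K \<le> ?P y) (at_right_end b)"
        by eventually_elim (use mono[OF z(1) _ z(2)] \<open>K \<le> ?P z\<close> in force)
      then show False using nev by simp
    qed
    obtain X :: "nat \<Rightarrow> real" where X: "incseq X" "\<And>i. a < X i" "\<And>i. X i < b" "X \<longlonglongrightarrow> b"
      using ereal_incseq_approx[OF ab] by blast
    define Y where "Y i = max c (X i)" for i
    have XI: "X i \<in> Iab a b" for i using X by (simp add: Iab_def)
    have YI: "Y i \<in> Iab a b" for i using XI c by (simp add: Y_def max_def)
    have Yinc: "incseq Y" using X(1) unfolding Y_def incseq_def by (meson max.mono order_refl)
    define S where "S = {x\<in>Iab a b. c \<le> x}"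
    let ?h = "\<lambda>x. ennreal (indicator (Iab a b) x * h x)"
    define f where "f i x = ?h x * indicator {c..Y i} x" for i x
    have fm: "f i \<in> borel_measurable lborel" for i
      unfolding f_def using hr_meas[OF hc] by measurable
    have finc: "incseq f"
      unfolding incseq_def le_fun_def f_def
    proof (intro allI impI)
      fix m n :: nat and x assume "m \<le> n"
      then have "Y m \<le> Y n" using Yinc by (simp add: incseq_def)
      then show "?h x * indicator {c..Y m} x \<le> ?h x * indicator {c..Y n} x"
        by (auto split: split_indicator)
    qed
    have fi: "integral\<^sup>N lborel (f i) \<le> ennreal K" for i
    proof -
      have "integral\<^sup>N lborel (f i) = (\<integral>\<^sup>+x\<in>{c..Y i}. ennreal (h x) \<partial>lborel)"
        unfolding f_def by (rule setint_restr[symmetric]) (use Iab_sub[OF c YI] in auto)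
      also have "\<dots> = ennreal (?P (Y i))" by (rule int_Icc[OF hc hnn c YI])
      also have "\<dots> \<le> ennreal K" using bd[OF YI, of i] by (intro ennreal_leI) (simp add: Y_def)
      finally show ?thesis .
    qed
    have pw: "(SUP i. f i x) = ?h x * indicator S x" for x
    proof (cases "x \<in> S")
      case True
      then have "ereal x < b" by (simp add: S_def Iab_def)
      then have "eventually (\<lambda>i. ereal x < ereal (X i)) sequentially"
        using order_tendstoD(1)[OF X(4) \<open>ereal x < b\<close>] by simp
      then obtain i where "x < X i" by (auto simp: eventually_sequentially)
      then have fx: "f i x = ?h x" using True by (auto simp: f_def S_def Y_def)
      have "f j x \<le> ?h x" for j by (auto simp: f_def split: split_indicator)
      then have "(SUP i. f i x) = ?h x"
        by (intro antisym SUP_least) (auto intro: SUP_upper2[of i] simp: fx)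
      then show ?thesis using True by simp
    next
      case False
      have "f i x = 0" for i using False YI[of i] Iab_conv[OF c YI[of i]]
        by (auto simp: f_def S_def split: split_indicator)
      then show ?thesis using False by simp
    qed
    have "(\<integral>\<^sup>+x\<in>S. ennreal (h x) \<partial>lborel) = (\<integral>\<^sup>+x\<in>S. ?h x \<partial>lborel)"
      by (rule setint_restr) (auto simp: S_def)
    also have "\<dots> = (\<integral>\<^sup>+x. (SUP i. f i x) \<partial>lborel)" by (simp add: pw)
    also have "\<dots> = (SUP i. integral\<^sup>N lborel (f i))"
      by (rule nn_integral_monotone_convergence_SUP[OF finc fm])
    also have "\<dots> \<le> ennreal K" by (rule SUP_least) (rule fi)
    finally show False using inf by (simp add: S_def top_unique)
  qed
qed



lemma div_left:
  assumes ab: "a < b" and hc: "continuous_on (Iab a b) h" and hnn: "\<And>x. x \<in> Iab a b \<Longrightarrow> 0 \<le> h x"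
    and c: "c \<in> Iab a b"
    and inf: "(\<integral>\<^sup>+x\<in>{x\<in>Iab a b. x \<le> c}. ennreal (h x) \<partial>lborel) = \<infinity>"
  shows "filterlim (\<lambda>y. integral {y..c} h) at_top (at_left_end a)"
proof -
  let ?P = "\<lambda>y. integral {y..c} h"
  have mono: "?P y2 \<le> ?P y1" if "y1 \<in> Iab a b" "y2 \<in> Iab a b" "y2 \<le> c" "y1 \<le> y2" for y1 y2
  proof -
    have sub: "{y1..c} \<subseteq> Iab a b" using Iab_sub c that by blast
    have int: "h integrable_on {y1..c}"
      using integrable_continuous_interval[OF continuous_on_subset[OF hc sub]] .
    have "integral {y1..y2} h + ?P y2 = ?P y1" using Henstock_Kurzweil_Integration.integral_combine[OF that(4,3) int] .
    moreover have "0 \<le> integral {y1..y2} h"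
    proof (rule integral_nonneg)
      show "h integrable_on {y1..y2}" by (rule integrable_on_subinterval[OF int]) (use that in auto)
      fix x assume "x \<in> {y1..y2}"
      then have "x \<in> Iab a b" using sub that by auto
      then show "0 \<le> h x" by (rule hnn)
    qed
    ultimately show ?thesis by simp
  qed
  show ?thesis unfolding filterlim_at_top
  proof (intro allI, rule ccontr)
    fix K assume nev: "\<not> eventually (\<lambda>z. K \<le> ?P z) (at_left_end a)"
    have bd: "?P z < K" if z: "z \<in> Iab a b" "z \<le> c" for z
    proof (rule ccontr)
      assume "\<not> ?P z < K"
      then have "K \<le> ?P z" by simp
      have "eventually (\<lambda>y. y \<in> Iab a b \<and> y < z) (at_left_end a)" using L_ev[OF ab z(1)] .
      then have "eventually (\<lambda>y. K \<le> ?P y) (at_left_end a)"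
        by eventually_elim (use mono[OF _ z(1) z(2)] \<open>K \<le> ?P z\<close> in force)
      then show False using nev by simp
    qed
    obtain X :: "nat \<Rightarrow> real" where X: "decseq X" "\<And>i. a < X i" "\<And>i. X i < b" "X \<longlonglongrightarrow> a"
      using ereal_decseq_approx[OF ab] by blast
    define Y where "Y i = min c (X i)" for i
    have XI: "X i \<in> Iab a b" for i using X by (simp add: Iab_def)
    have YI: "Y i \<in> Iab a b" for i using XI c by (simp add: Y_def min_def)
    have Ydec: "decseq Y" using X(1) unfolding Y_def decseq_def by (meson min.mono order_refl)
    define S where "S = {x\<in>Iab a b. x \<le> c}"
    let ?h = "\<lambda>x. ennreal (indicator (Iab a b) x * h x)"
    define f where "f i x = ?h x * indicator {Y i..c} x" for i x
    have fm: "f i \<in> borel_measurable lborel" for i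
      unfolding f_def using hr_meas[OF hc] by measurable
    have finc: "incseq f"
      unfolding incseq_def le_fun_def f_def
    proof (intro allI impI)
      fix m n :: nat and x assume "m \<le> n"
      then have "Y n \<le> Y m" using Ydec by (simp add: decseq_def)
      then show "?h x * indicator {Y m..c} x \<le> ?h x * indicator {Y n..c} x"
        by (auto split: split_indicator)
    qed
    have fi: "integral\<^sup>N lborel (f i) \<le> ennreal K" for i
    proof -
      have "integral\<^sup>N lborel (f i) = (\<integral>\<^sup>+x\<in>{Y i..c}. ennreal (h x) \<partial>lborel)"
        unfolding f_def by (rule setint_restr[symmetric]) (use Iab_sub[OF YI c] in auto)
      also have "\<dots> = ennreal (?P (Y i))" by (rule int_Icc[OF hc hnn YI c])
      also have "\<dots> \<le> ennreal K" using bd[OF YI, of i] by (intro ennreal_leI) (simp add: Y_def)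
      finally show ?thesis .
    qed
    have pw: "(SUP i. f i x) = ?h x * indicator S x" for x
    proof (cases "x \<in> S")
      case True
      then have "a < ereal x" by (simp add: S_def Iab_def)
      then have "eventually (\<lambda>i. ereal (X i) < ereal x) sequentially"
        using order_tendstoD(2)[OF X(4) \<open>a < ereal x\<close>] by simp
      then obtain i where "X i < x" by (auto simp: eventually_sequentially)
      then have fx: "f i x = ?h x" using True by (auto simp: f_def S_def Y_def)
      have "f j x \<le> ?h x" for j by (auto simp: f_def split: split_indicator)
      then have "(SUP i. f i x) = ?h x"
        by (intro antisym SUP_least) (auto intro: SUP_upper2[of i] simp: fx)
      then show ?thesis using True by simp
    next
      case False
      have "f i x = 0" for i using False YI[of i] Iab_conv[OF YI[of i] c]
        by (auto simp: f_def S_def split: split_indicator)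
      then show ?thesis using False by simp
    qed
    have "(\<integral>\<^sup>+x\<in>S. ennreal (h x) \<partial>lborel) = (\<integral>\<^sup>+x\<in>S. ?h x \<partial>lborel)"
      by (rule setint_restr) (auto simp: S_def)
    also have "\<dots> = (\<integral>\<^sup>+x. (SUP i. f i x) \<partial>lborel)" by (simp add: pw)
    also have "\<dots> = (SUP i. integral\<^sup>N lborel (f i))"
      by (rule nn_integral_monotone_convergence_SUP[OF finc fm])
    also have "\<dots> \<le> ennreal K" by (rule SUP_least) (rule fi)
    finally show False using inf by (simp add: S_def top_unique)
  qed
qed



lemma setint_cmult:
  assumes hc: "continuous_on (Iab a b) h" and A: "A \<subseteq> Iab a b" "A \<in> sets lborel" and k: "0 \<le> k"
  shows "(\<integral>\<^sup>+x\<in>A. ennreal (k * h x) \<partial>lborel) = ennreal k * (\<integral>\<^sup>+x\<in>A. ennreal (h x) \<partial>lborel)"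
proof -
  have "(\<integral>\<^sup>+x\<in>A. ennreal (k * h x) \<partial>lborel) = (\<integral>\<^sup>+x\<in>A. ennreal (indicator (Iab a b) x * (k * h x)) \<partial>lborel)"
    by (rule setint_restr[OF A(1)])
  also have "\<dots> = (\<integral>\<^sup>+x. ennreal k * (ennreal (indicator (Iab a b) x * h x) * indicator A x) \<partial>lborel)"
    using k by (intro nn_integral_cong) (simp add: ennreal_mult' mult.assoc mult.left_commute)
  also have "\<dots> = ennreal k * (\<integral>\<^sup>+x. ennreal (indicator (Iab a b) x * h x) * indicator A x \<partial>lborel)"
    by (rule nn_integral_cmult) (use hr_meas[OF hc] A(2) in measurable)
  also have "(\<integral>\<^sup>+x. ennreal (indicator (Iab a b) x * h x) * indicator A x \<partial>lborel) = (\<integral>\<^sup>+x\<in>A. ennreal (h x) \<partial>lborel)"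
    by (rule setint_restr[OF A(1), symmetric])
  finally show ?thesis .
qed

lemma ratio_bot:
  fixes g z :: "real \<Rightarrow> real"
  assumes lim: "((\<lambda>y. ereal (g y / z y)) \<longlongrightarrow> c) F" and c: "0 < c" and zb: "filterlim z at_bot F"
  shows "filterlim g at_bot F"
proof -
  obtain m where m: "0 < ereal m" "ereal m < c" using ereal_dense2[OF c] by blast
  have ev1: "eventually (\<lambda>y. ereal m < ereal (g y / z y)) F" using order_tendstoD(1)[OF lim m(2)] .
  show ?thesis unfolding filterlim_at_bot
  proof
    fix Z
    have ev2: "eventually (\<lambda>y. z y \<le> min (Z / m) (-1)) F" using zb unfolding filterlim_at_bot by blast
    show "eventually (\<lambda>y. g y \<le> Z) F" using ev1 ev2
    proof eventually_elim
      case (elim y)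
      have mp: "0 < m" using m by simp
      have zn: "z y < 0" using elim by simp
      have "m < g y / z y" using elim by simp
      then have "g y < m * z y" using zn by (simp add: neg_less_divide_eq mult.commute)
      moreover have "m * z y \<le> Z" using elim mp by (simp add: pos_le_divide_eq mult.commute)
      ultimately show ?case by simp
    qed
  qed
qed

lemma ratio_top:
  fixes g z :: "real \<Rightarrow> real"
  assumes lim: "((\<lambda>y. ereal (g y / z y)) \<longlongrightarrow> c) F" and c: "0 < c" and zt: "filterlim z at_top F"
  shows "filterlim g at_top F"
proof -
  obtain m where m: "0 < ereal m" "ereal m < c" using ereal_dense2[OF c] by blast
  have ev1: "eventually (\<lambda>y. ereal m < ereal (g y / z y)) F" using order_tendstoD(1)[OF lim m(2)] .
  show ?thesis unfolding filterlim_at_top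
  proof
    fix Z
    have ev2: "eventually (\<lambda>y. max (Z / m) 1 \<le> z y) F" using zt unfolding filterlim_at_top by blast
    show "eventually (\<lambda>y. Z \<le> g y) F" using ev1 ev2
    proof eventually_elim
      case (elim y)
      have mp: "0 < m" using m by simp
      have zp: "z y > 0" using elim by simp
      have "m < g y / z y" using elim by simp
      then have "m * z y < g y" using zp by (simp add: pos_less_divide_eq mult.commute)
      moreover have "Z \<le> m * z y" using elim mp by (simp add: pos_divide_le_eq mult.commute)
      ultimately show ?case by simp
    qed
  qed
qed



lemma setint_mono_set:
  assumes "A \<subseteq> B"
  shows "(\<integral>\<^sup>+x\<in>A. f x \<partial>M) \<le> (\<integral>\<^sup>+x\<in>B. f x \<partial>M)"
  using assms by (intro nn_integral_mono) (auto split: split_indicator)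

lemma at_right_end_nontriv: "at_right_end b \<noteq> bot"
  by (simp add: at_right_end_def)

lemma at_left_end_nontriv: "at_left_end a \<noteq> bot"
  by (simp add: at_left_end_def)



theorem lemma2p3:
  fixes mu sig c0 :: "real \<Rightarrow> real" and x0 k1 :: real and a b ca cb :: ereal
    and c1 :: "real \<Rightarrow> real \<Rightarrow> ereal" and refl_a :: bool
  assumes "diff_setting mu sig x0 a b"
    and "cond_A mu sig x0 a b refl_a"
    and "cond_B mu sig x0 a b refl_a c0 c1 k1"
    and "natural_a mu sig x0 a b" and "natural_b mu sig x0 a b"
    and "((\<lambda>x. ereal (c0 x)) \<longlongrightarrow> ca) (at_left_end a)"
    and "((\<lambda>x. ereal (c0 x)) \<longlongrightarrow> cb) (at_right_end b)"
  shows "let g = g0 mu sig x0 a b c0; \<zeta> = zeta mu sig x0 a b; I = Iab a b in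
     (\<forall>z\<in>I. ((\<lambda>y. ereal ((g z - g y) / (\<zeta> z - \<zeta> y))) \<longlongrightarrow> ca) (at_left_end a)) \<and>
     (\<forall>y\<in>I. ((\<lambda>z. ereal ((g z - g y) / (\<zeta> z - \<zeta> y))) \<longlongrightarrow> cb) (at_right_end b)) \<and>
     ((\<lambda>(y, z). ereal ((g z - g y) / (\<zeta> z - \<zeta> y))) \<longlongrightarrow> ca)
        (inf (at_left_end a \<times>\<^sub>F at_left_end a) (principal {(y, z). y < z})) \<and>
     ((\<lambda>(y, z). ereal ((g z - g y) / (\<zeta> z - \<zeta> y))) \<longlongrightarrow> cb)
        (inf (at_right_end b \<times>\<^sub>F at_right_end b) (principal {(y, z). y < z})) \<and>
     ((\<lambda>y. ereal (g y / \<zeta> y)) \<longlongrightarrow> ca) (at_left_end a) \<and>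
     ((\<lambda>z. ereal (g z / \<zeta> z)) \<longlongrightarrow> cb) (at_right_end b) \<and>
     (ca > 0 \<longrightarrow> filterlim g at_bot (at_left_end a)) \<and>
     (cb > 0 \<longrightarrow> filterlim g at_top (at_right_end b))"
proof -
  let ?I = "Iab a b"
  define s where "s = sdens mu sig x0"
  define md where "md = mdens mu sig x0"
  from assms(1) have ab: "a < b" and x0: "x0 \<in> ?I" and cmu: "continuous_on ?I mu"
    and csig: "continuous_on ?I sig" and sig0: "\<And>x. x \<in> ?I \<Longrightarrow> sig x \<noteq> 0"
    unfolding diff_setting_def by auto
  define q where "q = (\<lambda>v. 2 * mu v / (sig v)^2)"
  have cq: "continuous_on ?I q" unfolding q_def using cmu csig sig0 by (auto intro!: continuous_intros)
  have s_fun: "s = (\<lambda>x. exp (- sint q x0 x))" unfolding s_def sdens_def q_def by (simp add: fun_eq_iff)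
  have s_pos: "\<And>x. 0 < s x" unfolding s_fun by simp
  have cs: "continuous_on ?I s"
  proof (rule continuous_at_imp_continuous_on, intro ballI)
    fix x assume x: "x \<in> ?I"
    have "isCont (\<lambda>t. sint q x0 t) x" by (rule DERIV_isCont[OF sint_deriv[OF cq x0 x]])
    then show "isCont s x" unfolding s_fun by (auto intro: continuous_intros)
  qed
  have md_fun: "md = (\<lambda>x. 1 / ((sig x)^2 * s x))" unfolding md_def mdens_def s_def by (simp add: fun_eq_iff)
  have md_pos: "\<And>x. x \<in> ?I \<Longrightarrow> 0 < md x" unfolding md_fun using sig0 s_pos by simp
  have mdnn: "\<And>x. x \<in> ?I \<Longrightarrow> 0 \<le> md x" using md_pos less_imp_le by blast
  have s_ne: "\<And>x. s x \<noteq> 0" using s_pos by (metis less_irrefl)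
  have mdc: "continuous_on ?I md" unfolding md_fun using csig cs sig0 s_ne
    by (auto intro!: continuous_intros)
  have notatt: "\<not> attainable_a mu sig x0 a b" using assms(4)
    by (auto simp: attainable_a_def regular_a_def exit_a_def natural_a_def)
  have notent: "\<not> entrance_b mu sig x0 a b" using assms(5)
    by (auto simp: entrance_b_def natural_b_def)
  have E: "Espace mu sig x0 a b = ?I" by (simp add: Espace_def Eleft_def Eright_def notatt notent)
  from assms(3) have c0nn: "\<And>x. x \<in> ?I \<Longrightarrow> 0 \<le> c0 x" and cc0: "continuous_on ?I c0"
    and c0fin: "\<And>y. y \<in> ?I \<Longrightarrow> (\<integral>\<^sup>+ v\<in>{v\<in>?I. y \<le> v}. ennreal (c0 v * md v) \<partial>lborel) < \<infinity>"
    unfolding cond_B_def Let_def E md_def by auto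
  from assms(2,5) have Mfin: "\<And>y. y \<in> ?I \<Longrightarrow> (\<integral>\<^sup>+ v\<in>{v\<in>?I. y \<le> v}. ennreal (md v) \<partial>lborel) < \<infinity>"
    and Sfin: "Smeas mu sig x0 {v\<in>?I. v \<le> x0} < \<infinity>"
    unfolding cond_A_def Mmeas_def md_def using x0 by auto
  define hC where "hC = (\<lambda>v. 2 * c0 v * md v)"
  have hCc: "continuous_on ?I hC" unfolding hC_def using cc0 mdc by (auto intro!: continuous_intros)
  have hCnn: "\<And>x. x \<in> ?I \<Longrightarrow> 0 \<le> hC x" unfolding hC_def using c0nn mdnn by simp
  have finC: "(\<integral>\<^sup>+ v\<in>{v\<in>?I. y \<le> v}. ennreal (hC v) \<partial>lborel) < \<infinity>" if y: "y \<in> ?I" for y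
  proof -
    have cm: "continuous_on ?I (\<lambda>v. c0 v * md v)" using cc0 mdc by (auto intro!: continuous_intros)
    have "(\<integral>\<^sup>+ v\<in>{v\<in>?I. y \<le> v}. ennreal (hC v) \<partial>lborel)
        = (\<integral>\<^sup>+ v\<in>{v\<in>?I. y \<le> v}. ennreal (2 * (c0 v * md v)) \<partial>lborel)"
      by (simp add: hC_def mult.assoc)
    also have "\<dots> = ennreal 2 * (\<integral>\<^sup>+ v\<in>{v\<in>?I. y \<le> v}. ennreal (c0 v * md v) \<partial>lborel)"
      by (rule setint_cmult[OF cm]) (auto intro: Iab_ge_sets)
    also have "\<dots> < \<infinity>" using c0fin[OF y] by (simp add: ennreal_mult_less_top)
    finally show ?thesis .
  qed
  define T where "T = tailf a b md"
  define TC where "TC = tailf a b hC"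
  have MT: "Mtail mu sig x0 a b = T" by (simp add: fun_eq_iff Mtail_def T_def tailf_def Mmeas_def md_def)
  have CT: "c0tail mu sig x0 a b c0 = TC" by (simp add: fun_eq_iff c0tail_def TC_def tailf_def hC_def md_def)
  have T_der: "\<And>u. u \<in> ?I \<Longrightarrow> (T has_real_derivative - md u) (at u)"
    unfolding T_def by (rule tail_deriv[OF mdc mdnn Mfin x0])
  have TC_der: "\<And>u. u \<in> ?I \<Longrightarrow> (TC has_real_derivative - hC u) (at u)"
    unfolding TC_def by (rule tail_deriv[OF hCc hCnn finC x0])
  have cT: "continuous_on ?I T"
    by (rule continuous_at_imp_continuous_on) (use T_der DERIV_isCont in blast)
  have cTC: "continuous_on ?I TC"
    by (rule continuous_at_imp_continuous_on) (use TC_der DERIV_isCont in blast)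
  have T_nn: "\<And>u. 0 \<le> T u" unfolding T_def by (rule tail_nonneg)
  have T_pos: "0 < T u" if u: "u \<in> ?I" for u
  proof -
    obtain v where v: "v \<in> ?I" "u < v" using Iab_ex_gt[OF u] by blast
    have der': "\<And>x. x \<in> ?I \<Longrightarrow> ((\<lambda>x. - T x) has_real_derivative md x) (at x)"
      using T_der by (auto intro!: derivative_eq_intros)
    have "- T u < - T v" using G_incr[OF der' md_pos u v] .
    then show ?thesis using T_nn[of v] by simp
  qed
  have T_ennreal: "(\<integral>\<^sup>+ v\<in>{v\<in>?I. y \<le> v}. ennreal (md v) \<partial>lborel) = ennreal (T y)" if "y \<in> ?I" for y
    using Mfin[OF that] by (simp add: T_def tailf_def)
  have TC_ennreal: "(\<integral>\<^sup>+ v\<in>{v\<in>?I. y \<le> v}. ennreal (hC v) \<partial>lborel) = ennreal (TC y)" if "y \<in> ?I" for y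
    using finC[OF that] by (simp add: TC_def tailf_def)
  define gg where "gg = g0 mu sig x0 a b c0"
  define zz where "zz = zeta mu sig x0 a b"
  have gg_fun: "gg = (\<lambda>x. sint (\<lambda>u. TC u * s u) x0 x)"
    by (simp add: fun_eq_iff gg_def g0_def CT s_def)
  have zz_fun: "zz = (\<lambda>x. sint (\<lambda>u. 2 * T u * s u) x0 x)"
    by (simp add: fun_eq_iff zz_def zeta_def MT s_def)
  have gg_der: "\<And>x. x \<in> ?I \<Longrightarrow> (gg has_real_derivative TC x * s x) (at x)"
    unfolding gg_fun by (rule sint_deriv[OF _ x0]) (use cTC cs in \<open>auto intro!: continuous_intros\<close>)
  have czh: "continuous_on ?I (\<lambda>u. 2 * T u * s u)" using cT cs by (auto intro!: continuous_intros)
  have zz_der: "\<And>x. x \<in> ?I \<Longrightarrow> (zz has_real_derivative 2 * T x * s x) (at x)"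
    unfolding zz_fun by (rule sint_deriv[OF czh x0])
  have zpos: "\<And>x. x \<in> ?I \<Longrightarrow> 0 < 2 * T x * s x" using T_pos s_pos by simp
  have zhnn: "\<And>x. x \<in> ?I \<Longrightarrow> 0 \<le> 2 * T x * s x" using zpos less_imp_le by blast
  have evI_a: "eventually (\<lambda>y. y \<in> ?I \<and> y < x0) (at_left_end a)" by (rule L_ev[OF ab x0])
  have evI_b: "eventually (\<lambda>y. y \<in> ?I \<and> x0 < y) (at_right_end b)" by (rule R_ev[OF ab x0])
  have Mleft: "(\<integral>\<^sup>+x\<in>{x\<in>?I. x \<le> x0}. ennreal (md x) \<partial>lborel) = \<infinity>"
  proof (rule ccontr)
    let ?Mlf = "(\<integral>\<^sup>+x\<in>{x\<in>?I. x \<le> x0}. ennreal (md x) \<partial>lborel)"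
    assume "?Mlf \<noteq> \<infinity>"
    then have Mlff: "?Mlf < \<infinity>" by (simp add: less_top)
    define k where "k = enn2real ?Mlf"
    have k: "?Mlf = ennreal k" "0 \<le> k" using Mlff by (auto simp: k_def)
    have key: "Mmeas mu sig x0 {v\<in>?I. v \<le> u} * ennreal (s u) \<le> ennreal (k * s u)"
      if u: "u \<in> ?I" "u \<le> x0" for u
    proof -
      have "Mmeas mu sig x0 {v\<in>?I. v \<le> u} \<le> ?Mlf"
        unfolding Mmeas_def md_def by (rule setint_mono_set) (use u in auto)
      then have "Mmeas mu sig x0 {v\<in>?I. v \<le> u} * ennreal (s u) \<le> ennreal k * ennreal (s u)"
        using k by (auto intro: mult_right_mono)
      then show ?thesis using k s_pos[of u] by (simp add: ennreal_mult)
    qed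
    have "N_a mu sig x0 a b \<le> (\<integral>\<^sup>+u\<in>{u\<in>?I. u \<le> x0}. ennreal (k * s u) \<partial>lborel)"
      unfolding N_a_def s_def[symmetric]
      by (rule nn_integral_mono) (use key in \<open>auto split: split_indicator\<close>)
    also have "\<dots> = ennreal k * Smeas mu sig x0 {v\<in>?I. v \<le> x0}"
      unfolding Smeas_def s_def[symmetric] by (rule setint_cmult[OF cs]) (use k in \<open>auto intro: Iab_le_sets\<close>)
    also have "\<dots> < \<infinity>" using Sfin by (simp add: ennreal_mult_less_top)
    finally show False using assms(4) by (simp add: natural_a_def)
  qed
  have lim1: "filterlim (\<lambda>y. integral {y..x0} md) at_top (at_left_end a)"
    by (rule div_left[OF ab mdc mdnn x0 Mleft])
  have T_top: "filterlim T at_top (at_left_end a)"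
  proof (rule filterlim_at_top_mono[OF lim1])
    show "eventually (\<lambda>y. integral {y..x0} md \<le> T y) (at_left_end a)" using evI_a
    proof eventually_elim
      case (elim y)
      then show ?case using tail_diff[OF mdc mdnn Mfin _ x0, of y] T_nn[of x0] by (simp add: T_def)
    qed
  qed
  have keyS: "Mmeas mu sig x0 A * ennreal (s u) \<le> ennreal (2 * T u * s u)"
    if u: "u \<in> ?I" and A: "A \<subseteq> {v\<in>?I. u \<le> v}" for u A
  proof -
    have "Mmeas mu sig x0 A \<le> ennreal (T u)"
      using setint_mono_set[OF A, where f="\<lambda>x. ennreal (md x)" and M=lborel] T_ennreal[OF u]
      unfolding Mmeas_def md_def by simp
    then have "Mmeas mu sig x0 A * ennreal (s u) \<le> ennreal (T u) * ennreal (s u)"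
      by (auto intro: mult_right_mono)
    also have "\<dots> = ennreal (T u * s u)" using T_nn[of u] s_pos[of u] by (simp add: ennreal_mult)
    also have "\<dots> \<le> ennreal (2 * T u * s u)" using T_nn[of u] s_pos[of u] by (intro ennreal_leI) simp
    finally show ?thesis .
  qed
  have keyS2: "Mmeas mu sig x0 {v\<in>?I. u \<le> v \<and> v \<le> x0} * ennreal (s u) \<le> ennreal (2 * T u * s u)"
    if "u \<in> ?I" for u by (rule keyS[OF that]) auto
  have keyS3: "Mmeas mu sig x0 {v\<in>?I. u \<le> v} * ennreal (s u) \<le> ennreal (2 * T u * s u)"
    if "u \<in> ?I" for u by (rule keyS[OF that]) auto
  have "Sigma_a mu sig x0 a b \<le> (\<integral>\<^sup>+u\<in>{u\<in>?I. u \<le> x0}. ennreal (2 * T u * s u) \<partial>lborel)"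
    unfolding Sigma_a_def s_def[symmetric]
    by (rule nn_integral_mono) (use keyS2 in \<open>auto split: split_indicator\<close>)
  then have infS: "(\<integral>\<^sup>+u\<in>{u\<in>?I. u \<le> x0}. ennreal (2 * T u * s u) \<partial>lborel) = \<infinity>"
    using assms(4) by (simp add: natural_a_def top_unique)
  have lim2: "filterlim (\<lambda>y. integral {y..x0} (\<lambda>u. 2 * T u * s u)) at_top (at_left_end a)"
    by (rule div_left[OF ab czh zhnn x0 infS])
  have zz_bot: "filterlim zz at_bot (at_left_end a)"
    unfolding filterlim_uminus_at_bot
  proof (rule filterlim_at_top_mono[OF lim2])
    show "eventually (\<lambda>y. integral {y..x0} (\<lambda>u. 2 * T u * s u) \<le> - zz y) (at_left_end a)"
      using evI_a by eventually_elim (simp add: zz_fun sint_def)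
  qed
  have "N_b mu sig x0 a b \<le> (\<integral>\<^sup>+u\<in>{u\<in>?I. x0 \<le> u}. ennreal (2 * T u * s u) \<partial>lborel)"
    unfolding N_b_def s_def[symmetric]
    by (rule nn_integral_mono) (use keyS3 in \<open>auto split: split_indicator\<close>)
  then have infN: "(\<integral>\<^sup>+u\<in>{u\<in>?I. x0 \<le> u}. ennreal (2 * T u * s u) \<partial>lborel) = \<infinity>"
    using assms(5) by (simp add: natural_b_def top_unique)
  have lim3: "filterlim (\<lambda>z. integral {x0..z} (\<lambda>u. 2 * T u * s u)) at_top (at_right_end b)"
    by (rule div_right[OF ab czh zhnn x0 infN])
  have zz_top: "filterlim zz at_top (at_right_end b)"
  proof (rule filterlim_at_top_mono[OF lim3])
    show "eventually (\<lambda>z. integral {x0..z} (\<lambda>u. 2 * T u * s u) \<le> zz z) (at_right_end b)"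
      using evI_b by eventually_elim (simp add: zz_fun sint_def)
  qed
  have ratio_eq: "TC u * s u / (2 * T u * s u) = TC u / (2 * T u)" for u
    using s_pos[of u] by simp
  have Ttop2: "filterlim (\<lambda>u. 2 * T u) at_top (at_left_end a)"
    by (rule filterlim_at_top_mono[OF T_top]) (use T_nn in \<open>auto intro: always_eventually\<close>)
  have Gb: "filterlim (\<lambda>u. - (2 * T u)) at_bot (at_left_end a)"
    using Ttop2 by (simp add: filterlim_uminus_at_top)
  have derF: "\<And>x. x \<in> ?I \<Longrightarrow> ((\<lambda>u. - TC u) has_real_derivative hC x) (at x)"
    using TC_der by (auto intro!: derivative_eq_intros)
  have derG: "\<And>x. x \<in> ?I \<Longrightarrow> ((\<lambda>u. - (2 * T u)) has_real_derivative 2 * md x) (at x)"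
    using T_der by (auto intro!: derivative_eq_intros)
  have gpos2: "\<And>x. x \<in> ?I \<Longrightarrow> 0 < 2 * md x" using md_pos by simp
  have limc: "((\<lambda>u. ereal (hC u / (2 * md u))) \<longlongrightarrow> ca) (at_left_end a)"
  proof (rule Lim_transform_eventually[OF assms(6)])
    show "eventually (\<lambda>u. ereal (c0 u) = ereal (hC u / (2 * md u))) (at_left_end a)"
      using evI_a
    proof eventually_elim
      case (elim u)
      then have "md u \<noteq> 0" using md_pos by force
      then show ?case by (simp add: hC_def)
    qed
  qed
  have LL: "((\<lambda>y. ereal ((0 - - TC y) / (0 - - (2 * T y)))) \<longlongrightarrow> ca) (at_left_end a)"
    using left_lim[OF ab derF derG gpos2 limc Gb, of 0 0] by simp
  have rat_a: "((\<lambda>u. ereal (TC u * s u / (2 * T u * s u))) \<longlongrightarrow> ca) (at_left_end a)"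
    using LL by (simp add: ratio_eq)
  have TC_nn: "\<And>u. 0 \<le> TC u" unfolding TC_def by (rule tail_nonneg)
  have lowb: "2 * m1 * T z \<le> TC z"
    if z: "z \<in> ?I" and m1: "0 \<le> m1" and c: "\<And>v. v \<in> ?I \<Longrightarrow> z \<le> v \<Longrightarrow> m1 \<le> c0 v" for z m1
  proof -
    have "ennreal (2 * m1 * T z) = ennreal (2 * m1) * ennreal (T z)"
      using m1 T_nn[of z] by (simp add: ennreal_mult)
    also have "\<dots> = ennreal (2 * m1) * (\<integral>\<^sup>+ v\<in>{v\<in>?I. z \<le> v}. ennreal (md v) \<partial>lborel)"
      using T_ennreal[OF z] by simp
    also have "\<dots> = (\<integral>\<^sup>+ v\<in>{v\<in>?I. z \<le> v}. ennreal (2 * m1 * md v) \<partial>lborel)"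
      by (rule setint_cmult[OF mdc, symmetric]) (use m1 in \<open>auto intro: Iab_ge_sets\<close>)
    also have "\<dots> \<le> (\<integral>\<^sup>+ v\<in>{v\<in>?I. z \<le> v}. ennreal (hC v) \<partial>lborel)"
    proof (rule nn_integral_mono)
      fix v
      have "v \<in> ?I \<Longrightarrow> z \<le> v \<Longrightarrow> 2 * m1 * md v \<le> hC v"
        using c[of v] md_pos[of v] by (simp add: hC_def)
      then show "ennreal (2 * m1 * md v) * indicator {v\<in>?I. z \<le> v} v \<le> ennreal (hC v) * indicator {v\<in>?I. z \<le> v} v"
        by (auto split: split_indicator intro: ennreal_leI)
    qed
    also have "\<dots> = ennreal (TC z)" by (rule TC_ennreal[OF z])
    finally show ?thesis using TC_nn[of z] by simp
  qed
  have upb: "TC z \<le> 2 * m1 * T z"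
    if z: "z \<in> ?I" and m1: "0 \<le> m1" and c: "\<And>v. v \<in> ?I \<Longrightarrow> z \<le> v \<Longrightarrow> c0 v \<le> m1" for z m1
  proof -
    have "ennreal (TC z) = (\<integral>\<^sup>+ v\<in>{v\<in>?I. z \<le> v}. ennreal (hC v) \<partial>lborel)" by (rule TC_ennreal[OF z, symmetric])
    also have "\<dots> \<le> (\<integral>\<^sup>+ v\<in>{v\<in>?I. z \<le> v}. ennreal (2 * m1 * md v) \<partial>lborel)"
    proof (rule nn_integral_mono)
      fix v
      have "v \<in> ?I \<Longrightarrow> z \<le> v \<Longrightarrow> hC v \<le> 2 * m1 * md v"
        using c[of v] md_pos[of v] by (simp add: hC_def)
      then show "ennreal (hC v) * indicator {v\<in>?I. z \<le> v} v \<le> ennreal (2 * m1 * md v) * indicator {v\<in>?I. z \<le> v} v"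
        by (auto split: split_indicator intro: ennreal_leI)
    qed
    also have "\<dots> = ennreal (2 * m1) * (\<integral>\<^sup>+ v\<in>{v\<in>?I. z \<le> v}. ennreal (md v) \<partial>lborel)"
      by (rule setint_cmult[OF mdc]) (use m1 in \<open>auto intro: Iab_ge_sets\<close>)
    also have "\<dots> = ennreal (2 * m1) * ennreal (T z)"
      using T_ennreal[OF z] by simp
    also have "\<dots> = ennreal (2 * m1 * T z)"
      using m1 T_nn[of z] by (simp add: ennreal_mult)
    finally show ?thesis using m1 T_nn[of z] by simp
  qed
  have cb_nn: "0 \<le> cb"
  proof (rule tendsto_lowerbound[OF assms(7)])
    show "eventually (\<lambda>i. 0 \<le> ereal (c0 i)) (at_right_end b)"
      using evI_b by eventually_elim (use c0nn in simp)
    show "\<not> trivial_limit (at_right_end b)" using at_right_end_nontriv by simp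
  qed
  have rat_b: "((\<lambda>u. ereal (TC u * s u / (2 * T u * s u))) \<longlongrightarrow> cb) (at_right_end b)"
    unfolding ratio_eq
  proof (rule order_tendstoI)
    fix M assume M: "M < cb"
    show "eventually (\<lambda>z. M < ereal (TC z / (2 * T z))) (at_right_end b)"
    proof (cases M)
      case (real m)
      show ?thesis
      proof (cases "m < 0")
        case True
        show ?thesis using evI_b
        proof eventually_elim
          case (elim z)
          have "0 \<le> TC z / (2 * T z)" using TC_nn[of z] T_nn[of z] by simp
          then show ?case using True real by simp
        qed
      next
        case False
        obtain m1 where m1: "ereal m < ereal m1" "ereal m1 < cb" using ereal_dense2 M real by blast
        have "eventually (\<lambda>u. ereal m1 < ereal (c0 u)) (at_right_end b)"
          by (rule order_tendstoD(1)[OF assms(7) m1(2)])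
        then obtain w where w: "w \<in> ?I" "\<forall>u\<in>?I. w < u \<longrightarrow> ereal m1 < ereal (c0 u)"
          using R_ex[OF ab] by blast
        show ?thesis using R_ev[OF ab w(1)]
        proof eventually_elim
          case (elim z)
          have m1p: "0 \<le> m1" using m1 False by simp
          have "2 * m1 * T z \<le> TC z"
            by (rule lowb[OF _ m1p]) (use elim w in \<open>auto intro: less_imp_le\<close>)
          then have "m1 \<le> TC z / (2 * T z)" using T_pos[of z] elim by (simp add: pos_le_divide_eq mult.commute mult.left_commute)
          then show ?case using m1 real by simp
        qed
      qed
    qed (use M in auto)
  next
    fix M assume M: "cb < M"
    show "eventually (\<lambda>z. ereal (TC z / (2 * T z)) < M) (at_right_end b)"
    proof (cases M)
      case (real m)
      obtain m1 where m1: "cb < ereal m1" "ereal m1 < ereal m" using ereal_dense2 M real by blast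
      have m1p: "0 \<le> m1" using m1 cb_nn by (metis ereal_less_eq(5) less_imp_le order.strict_trans1 zero_ereal_def)
      have "eventually (\<lambda>u. ereal (c0 u) < ereal m1) (at_right_end b)"
        by (rule order_tendstoD(2)[OF assms(7) m1(1)])
      then obtain w where w: "w \<in> ?I" "\<forall>u\<in>?I. w < u \<longrightarrow> ereal (c0 u) < ereal m1"
        using R_ex[OF ab] by blast
      show ?thesis using R_ev[OF ab w(1)]
      proof eventually_elim
        case (elim z)
        have "TC z \<le> 2 * m1 * T z"
          by (rule upb[OF _ m1p]) (use elim w in \<open>auto intro: less_imp_le\<close>)
        then have "TC z / (2 * T z) \<le> m1" using T_pos[of z] elim by (simp add: pos_divide_le_eq mult.commute mult.left_commute)
        then show ?case using m1 real by simp
      qed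
    qed (use M in auto)
  qed
  have r1: "\<forall>z\<in>?I. ((\<lambda>y. ereal ((gg z - gg y) / (zz z - zz y))) \<longlongrightarrow> ca) (at_left_end a)"
    using left_lim[OF ab gg_der zz_der zpos rat_a zz_bot] by blast
  have r2: "\<forall>y\<in>?I. ((\<lambda>z. ereal ((gg z - gg y) / (zz z - zz y))) \<longlongrightarrow> cb) (at_right_end b)"
    using right_lim[OF ab gg_der zz_der zpos rat_b zz_top] by blast
  have r3: "((\<lambda>(y, z). ereal ((gg z - gg y) / (zz z - zz y))) \<longlongrightarrow> ca)
        (inf (at_left_end a \<times>\<^sub>F at_left_end a) (principal {(y, z). y < z}))"
    by (rule left_lim2[OF ab gg_der zz_der zpos rat_a])
  have r4: "((\<lambda>(y, z). ereal ((gg z - gg y) / (zz z - zz y))) \<longlongrightarrow> cb)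
        (inf (at_right_end b \<times>\<^sub>F at_right_end b) (principal {(y, z). y < z}))"
    by (rule right_lim2[OF ab gg_der zz_der zpos rat_b])
  have r5: "((\<lambda>y. ereal (gg y / zz y)) \<longlongrightarrow> ca) (at_left_end a)"
    using left_lim[OF ab gg_der zz_der zpos rat_a zz_bot, of 0 0] by simp
  have r6: "((\<lambda>z. ereal (gg z / zz z)) \<longlongrightarrow> cb) (at_right_end b)"
    using right_lim[OF ab gg_der zz_der zpos rat_b zz_top, of 0 0] by simp
  have r7: "ca > 0 \<longrightarrow> filterlim gg at_bot (at_left_end a)"
    using ratio_bot[OF r5 _ zz_bot] by blast
  have r8: "cb > 0 \<longrightarrow> filterlim gg at_top (at_right_end b)"
    using ratio_top[OF r6 _ zz_top] by blast
  show ?thesis unfolding Let_def gg_def[symmetric] zz_def[symmetric]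
    using r1 r2 r3 r4 r5 r6 r7 r8 by blast
qed


end
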